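(* Let $f=f_1\wedge\dots\wedge f_r\in\wedge^rS_m$, let $w=(w_0,\dots,w_n)\in\mathbb Z^{n+1}$ be a weight vector with $w_0>w_1>\dots>w_n$ which distinguishes monomials in degree $rm$, and for $t\neq0$ let $\lambda(t)$ be the diagonal matrix with diagonal entries $t^{-w_0},\dots,t^{-w_n}$. Let $h\in\mathrm{GL}(n+1,K)$ be upper-triangular and let $g\in U(f)$. Then for every integer $N$, $$\operatorname{supp}\big(h\cdot(\lambda(t)gf)_{\ge N}\big)=\operatorname{supp}\big((\lambda(t)gf)_{\ge N}\big)$$ for all but finitely many $t\in K\setminus\{0\}$.
   Context: $K$ algebraically closed of characteristic $0$, $S=K[x_0,\dots,x_n]$, $S_m$ its degree-$m$ part; $g=(a_{ij})\in\mathrm{GL}(n+1,K)$ acts on $S$ by $x_i\mapsto\sum_ja_{ji}x_j$, and on $\wedge^rS_m$ by $g(f_1\wedge\dots\wedge f_r)=gf_1\wedge\dots\wedge gf_r$. A state is a wedge product $\mathbf x^{B_1}\wedge\dots\wedge\mathbf x^{B_r}$ of $r$ pairwise distinct degree-$m$ monomials; two states are equivalent if they differ by a reordering (hence by a sign). Every $F\in\wedge^rS_m$ is uniquely a linear combination of states (one representative per equivalence class); $\operatorname{supp}(F)$ is the set of states occurring with nonzero coefficient. The weight of the state (and of the corresponding term) is $w\cdot(B_1+\dots+B_r)$. For an integer $N$, $F_{\ge N}$ is the sum of the terms of $F$ of weight $\ge N$. A weight vector $w$ distinguishes monomials in degree $d$ if $w\cdot A\neq w\cdot B$ for all distinct $A,B\in\mathbb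 N^{n+1}$ of degree $d$. $U(f)$: let $G$ be the $(n+1)\times(n+1)$ matrix of indeterminates $G_{ij}$ and expand $Gf$ as a linear combination of states with coefficients polynomials in the $G_{ij}$; $U(f)\subseteq\mathrm{GL}(n+1,K)$ is the open set where none of those coefficient polynomials that are not identically zero vanish. *)

theory Defs
  imports Main "HOL-Library.Poly_Mapping" "HOL-Combinatorics.Permutations"
    "HOL-Computational_Algebra.Polynomial"
begin

(* Monomials x^A in x_0..x_n are exponent vectors A :: nat \<Rightarrow>\<^sub>0 nat;
  polynomials over a ring 'b are ((nat \<Rightarrow>\<^sub>0 nat) \<Rightarrow>\<^sub>0 'b).
  Matrices are functions nat \<Rightarrow> nat \<Rightarrow> 'b; only indices 0..n matter. *)

type_synonym mono = "nat \<Rightarrow>\<^sub>0 nat"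
type_synonym 'b mpoly = "mono \<Rightarrow>\<^sub>0 'b"

definition algebraically_closed :: "'a::field itself \<Rightarrow> bool" where
  "algebraically_closed _ \<longleftrightarrow> (\<forall>p::'a poly. degree p \<noteq> 0 \<longrightarrow> (\<exists>x. poly p x = 0))"

definition monos_deg :: "nat \<Rightarrow> nat \<Rightarrow> mono set" where
  "monos_deg n m = {A. Poly_Mapping.keys A \<subseteq> {..n} \<and> (\<Sum>i\<le>n. Poly_Mapping.lookup A i) = m}"

definition forms :: "nat \<Rightarrow> nat \<Rightarrow> ('b::zero) mpoly set" where
  "forms n m = {p. Poly_Mapping.keys p \<subseteq> monos_deg n m}"

definition monom :: "mono \<Rightarrow> ('b::{zero,one}) mpoly" where
  "monom A = Poly_Mapping.single A 1"

definition var :: "nat \<Rightarrow> ('b::{zero,one}) mpoly" where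
  "var i = monom (Poly_Mapping.single i 1)"

definition const :: "'b::zero \<Rightarrow> 'b mpoly" where
  "const c = Poly_Mapping.single 0 c"

definition act :: "nat \<Rightarrow> (nat \<Rightarrow> nat \<Rightarrow> 'b::comm_ring_1) \<Rightarrow> 'b mpoly \<Rightarrow> 'b mpoly" where
  "act n g p = (\<Sum>A\<in>Poly_Mapping.keys p. const (Poly_Mapping.lookup p A) *
       (\<Prod>i\<le>n. (\<Sum>j\<le>n. const (g j i) * var j) ^ Poly_Mapping.lookup A i))"

definition mdet :: "nat \<Rightarrow> (nat \<Rightarrow> nat \<Rightarrow> 'b::comm_ring_1) \<Rightarrow> 'b" where
  "mdet k M = (\<Sum>\<sigma> | \<sigma> permutes {..<k}. of_int (sign \<sigma>) * (\<Prod>i<k. M i (\<sigma> i)))"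

definition mmul :: "nat \<Rightarrow> (nat \<Rightarrow> nat \<Rightarrow> 'b::comm_ring_1) \<Rightarrow> (nat \<Rightarrow> nat \<Rightarrow> 'b) \<Rightarrow> (nat \<Rightarrow> nat \<Rightarrow> 'b)" where
  "mmul n A B = (\<lambda>i j. \<Sum>k\<le>n. A i k * B k j)"

definition GL :: "nat \<Rightarrow> (nat \<Rightarrow> nat \<Rightarrow> 'b::field) set" where
  "GL n = {g. mdet (Suc n) g \<noteq> 0}"

definition upper_tri :: "nat \<Rightarrow> (nat \<Rightarrow> nat \<Rightarrow> 'b::zero) \<Rightarrow> bool" where
  "upper_tri n h \<longleftrightarrow> (\<forall>i\<le>n. \<forall>j<i. h i j = 0)"

(* The state with monomial set S
  stands for the wedge x^{B_1} \<and> ... \<and> x^{B_r}, B_1 < ... < B_r in the (fixed)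
  linear order of poly_mapping. An element of \<and>^r S_m is given by its coefficient
  function on states. *)
definition states :: "nat \<Rightarrow> nat \<Rightarrow> nat \<Rightarrow> mono set set" where
  "states n m r = {S. S \<subseteq> monos_deg n m \<and> card S = r}"

definition rep :: "mono set \<Rightarrow> mono list" where
  "rep S = sorted_list_of_set S"

definition wedge :: "nat \<Rightarrow> nat \<Rightarrow> nat \<Rightarrow> ('b::comm_ring_1) mpoly list \<Rightarrow> mono set \<Rightarrow> 'b" where
  "wedge n m r fs S = (if S \<in> states n m r
      then mdet r (\<lambda>i j. Poly_Mapping.lookup (fs ! i) (rep S ! j)) else 0)"

(* action of h on a general element F of \<and>^r S_m (linear extension of
  h(f_1 \<and> ... \<and> f_r) = hf_1 \<and> ... \<and> hf_r) *)
definition actW :: "nat \<Rightarrow> nat \<Rightarrow> nat \<Rightarrow> (nat \<Rightarrow> nat \<Rightarrow> 'b::comm_ring_1)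
     \<Rightarrow> (mono set \<Rightarrow> 'b) \<Rightarrow> (mono set \<Rightarrow> 'b)" where
  "actW n m r h F = (\<lambda>C. \<Sum>S\<in>states n m r.
      F S * wedge n m r (map (\<lambda>B. act n h (monom B)) (rep S)) C)"

definition supp :: "nat \<Rightarrow> nat \<Rightarrow> nat \<Rightarrow> (mono set \<Rightarrow> 'b::zero) \<Rightarrow> mono set set" where
  "supp n m r F = {S \<in> states n m r. F S \<noteq> 0}"

definition wdot :: "nat \<Rightarrow> (nat \<Rightarrow> int) \<Rightarrow> mono \<Rightarrow> int" where
  "wdot n w A = (\<Sum>i\<le>n. w i * int (Poly_Mapping.lookup A i))"

definition sweight :: "nat \<Rightarrow> (nat \<Rightarrow> int) \<Rightarrow> mono set \<Rightarrow> int" where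
  "sweight n w S = (\<Sum>B\<in>S. wdot n w B)"

definition trunc :: "nat \<Rightarrow> (nat \<Rightarrow> int) \<Rightarrow> int \<Rightarrow> (mono set \<Rightarrow> 'b::zero) \<Rightarrow> (mono set \<Rightarrow> 'b)" where
  "trunc n w N F = (\<lambda>S. if sweight n w S \<ge> N then F S else 0)"

definition distinguishes :: "nat \<Rightarrow> (nat \<Rightarrow> int) \<Rightarrow> nat \<Rightarrow> bool" where
  "distinguishes n w d \<longleftrightarrow> (\<forall>A\<in>monos_deg n d. \<forall>B\<in>monos_deg n d. A \<noteq> B \<longrightarrow> wdot n w A \<noteq> wdot n w B)"

definition lam :: "(nat \<Rightarrow> int) \<Rightarrow> 'a::field \<Rightarrow> (nat \<Rightarrow> nat \<Rightarrow> 'a)" where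
  "lam w t = (\<lambda>i j. if i = j then t powi (- w i) else 0)"

(* U(f): generic matrix G of indeterminates G_ij, polynomials in K[G_ij] *)
type_synonym 'a gpoly = "((nat \<times> nat) \<Rightarrow>\<^sub>0 nat) \<Rightarrow>\<^sub>0 'a"

definition Gmat :: "nat \<Rightarrow> nat \<Rightarrow> ('a::{zero,one}) gpoly" where
  "Gmat i j = Poly_Mapping.single (Poly_Mapping.single (i, j) 1) 1"

definition gconst :: "'a::zero \<Rightarrow> 'a gpoly" where
  "gconst c = Poly_Mapping.single 0 c"

definition geval :: "(nat \<Rightarrow> nat \<Rightarrow> 'a::comm_ring_1) \<Rightarrow> 'a gpoly \<Rightarrow> 'a" where
  "geval g P = (\<Sum>E\<in>Poly_Mapping.keys P. Poly_Mapping.lookup P E * (\<Prod>ij\<in>Poly_Mapping.keys E. g (fst ij) (snd ij) ^ Poly_Mapping.lookup E ij))"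

definition U :: "nat \<Rightarrow> nat \<Rightarrow> nat \<Rightarrow> ('a::field) mpoly list \<Rightarrow> (nat \<Rightarrow> nat \<Rightarrow> 'a) set" where
  "U n m r fs = {g \<in> GL n. \<forall>S. let P = wedge n m r
        (map (\<lambda>f. act n Gmat (Poly_Mapping.map gconst f)) fs) S
      in P \<noteq> 0 \<longrightarrow> geval g P \<noteq> 0}"

end

theory Submission
  imports Defs "HOL-Library.FuncSet"
begin


section \<open>Ring homomorphisms\<close>

locale rh =
  fixes \<psi> :: "'b::comm_ring_1 \<Rightarrow> 'c::comm_ring_1"
  assumes hadd: "\<psi> (a + b) = \<psi> a + \<psi> b"
    and hmult: "\<psi> (a * b) = \<psi> a * \<psi> b"
    and hone: "\<psi> 1 = 1"
begin
lemma hzero: "\<psi> 0 = 0"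
proof -
  have "\<psi> (0 + 0) = \<psi> 0 + \<psi> 0" by (rule hadd)
  then show ?thesis by simp
qed
lemma huminus: "\<psi> (- a) = - \<psi> a"
proof -
  have "\<psi> (a + - a) = \<psi> a + \<psi> (- a)" by (rule hadd)
  then show ?thesis by (simp add: hzero eq_neg_iff_add_eq_0 add.commute)
qed
lemma hsum: "\<psi> (sum f A) = sum (\<lambda>x. \<psi> (f x)) A"
  by (induction A rule: infinite_finite_induct) (auto simp: hzero hadd)
lemma hprod: "\<psi> (prod f A) = prod (\<lambda>x. \<psi> (f x)) A"
  by (induction A rule: infinite_finite_induct) (auto simp: hone hmult)
lemma hpower: "\<psi> (a ^ k) = \<psi> a ^ k"
  by (induction k) (auto simp: hone hmult)
lemma hof_int: "\<psi> (of_int k) = of_int k"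
proof (induction k rule: int_induct[where k=0])
  case base then show ?case by (simp add: hzero)
next
  case (step1 i) then show ?case by (simp add: hadd hone)
next
  case (step2 i) then show ?case
    by (metis add_uminus_conv_diff diff_add_cancel hadd hone huminus of_int_1 of_int_diff)
qed
lemma hmdet: "\<psi> (mdet k M) = mdet k (\<lambda>i j. \<psi> (M i j))"
  unfolding mdet_def by (simp add: hsum hmult hof_int hprod)
end

lemma rh_id: "rh id" by (unfold_locales) auto

lemma pm_expand: "p = (\<Sum>A\<in>Poly_Mapping.keys p. Poly_Mapping.single A (Poly_Mapping.lookup p A))"
proof (rule poly_mapping_eqI)
  fix k
  show "Poly_Mapping.lookup p k = Poly_Mapping.lookup (\<Sum>A\<in>Poly_Mapping.keys p. Poly_Mapping.single A (Poly_Mapping.lookup p A)) k"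
    by (auto simp: lookup_sum lookup_single when_def in_keys_iff)
qed

lemma pm_mult_expand:
  "(p::'k::comm_monoid_add \<Rightarrow>\<^sub>0 'b::comm_ring_1) * q =
    (\<Sum>A\<in>Poly_Mapping.keys p. \<Sum>B\<in>Poly_Mapping.keys q.
        Poly_Mapping.single (A + B) (Poly_Mapping.lookup p A * Poly_Mapping.lookup q B))"
proof -
  have "p * q = (\<Sum>A\<in>Poly_Mapping.keys p. Poly_Mapping.single A (Poly_Mapping.lookup p A)) *
     (\<Sum>B\<in>Poly_Mapping.keys q. Poly_Mapping.single B (Poly_Mapping.lookup q B))"
    using pm_expand[of p] pm_expand[of q] by simp
  also have "\<dots> = (\<Sum>A\<in>Poly_Mapping.keys p. \<Sum>B\<in>Poly_Mapping.keys q.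
        Poly_Mapping.single A (Poly_Mapping.lookup p A) * Poly_Mapping.single B (Poly_Mapping.lookup q B))"
    by (simp add: sum_product)
  finally show ?thesis by (simp add: mult_single)
qed

section \<open>Generic evaluation\<close>

definition Ev :: "('b::comm_ring_1 \<Rightarrow> 'c::comm_ring_1) \<Rightarrow> ('k::comm_monoid_add \<Rightarrow> 'c) \<Rightarrow> ('k \<Rightarrow>\<^sub>0 'b) \<Rightarrow> 'c" where
  "Ev \<phi> e p = (\<Sum>A\<in>Poly_Mapping.keys p. \<phi> (Poly_Mapping.lookup p A) * e A)"

locale evl = rh \<phi> for \<phi> :: "'b::comm_ring_1 \<Rightarrow> 'c::comm_ring_1" +
  fixes e :: "'k::comm_monoid_add \<Rightarrow> 'c"
  assumes e0: "e 0 = 1" and eadd: "e (A + B) = e A * e B"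
begin

lemma Ev_superset: "finite K \<Longrightarrow> Poly_Mapping.keys p \<subseteq> K \<Longrightarrow>
   Ev \<phi> e p = (\<Sum>A\<in>K. \<phi> (Poly_Mapping.lookup p A) * e A)"
  unfolding Ev_def
  by (rule sum.mono_neutral_left) (auto simp: in_keys_iff hzero)

lemma Ev_single: "Ev \<phi> e (Poly_Mapping.single A c) = \<phi> c * e A"
  by (cases "c = 0") (auto simp: Ev_def hzero)

lemma Ev_add: "Ev \<phi> e (p + q) = Ev \<phi> e p + Ev \<phi> e q"
proof -
  let ?K = "Poly_Mapping.keys p \<union> Poly_Mapping.keys q"
  have "Ev \<phi> e (p + q) = (\<Sum>A\<in>?K. \<phi> (Poly_Mapping.lookup (p+q) A) * e A)"
    by (rule Ev_superset) (auto dest: subsetD[OF keys_add])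
  also have "\<dots> = (\<Sum>A\<in>?K. \<phi> (Poly_Mapping.lookup p A) * e A) + (\<Sum>A\<in>?K. \<phi> (Poly_Mapping.lookup q A) * e A)"
    by (simp add: lookup_add hadd distrib_right sum.distrib)
  also have "\<dots> = Ev \<phi> e p + Ev \<phi> e q"
    using Ev_superset[of ?K p] Ev_superset[of ?K q] by simp
  finally show ?thesis .
qed

lemma Ev_zero: "Ev \<phi> e 0 = 0" by (simp add: Ev_def)

lemma Ev_sum: "Ev \<phi> e (sum f X) = (\<Sum>x\<in>X. Ev \<phi> e (f x))"
  by (induction X rule: infinite_finite_induct) (auto simp: Ev_zero Ev_add)

lemma Ev_mult: "Ev \<phi> e (p * q) = Ev \<phi> e p * Ev \<phi> e q"
proof -
  have "Ev \<phi> e (p * q) = (\<Sum>A\<in>Poly_Mapping.keys p. \<Sum>B\<in>Poly_Mapping.keys q.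
        \<phi> (Poly_Mapping.lookup p A) * e A * (\<phi> (Poly_Mapping.lookup q B) * e B))"
    by (subst pm_mult_expand) (simp add: Ev_sum Ev_single hmult eadd mult_ac)
  also have "\<dots> = Ev \<phi> e p * Ev \<phi> e q"
    by (simp add: Ev_def sum_product)
  finally show ?thesis .
qed

lemma Ev_one: "Ev \<phi> e 1 = 1"
proof -
  have "(1::'k \<Rightarrow>\<^sub>0 'b) = Poly_Mapping.single 0 1" by simp
  then show ?thesis by (metis Ev_single e0 hone mult_1)
qed

lemma rh_Ev: "rh (Ev \<phi> e)"
  by unfold_locales (auto simp: Ev_add Ev_mult Ev_one)

end


lemma mdet_cong:
  assumes "\<And>i j. i < k \<Longrightarrow> j < k \<Longrightarrow> X i j = Y i j"
  shows "mdet k X = mdet k Y"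
  unfolding mdet_def
proof (rule sum.cong[OF refl])
  fix \<sigma> assume s: "\<sigma> \<in> {\<sigma>. \<sigma> permutes {..<k}}"
  have "(\<Prod>i<k. X i (\<sigma> i)) = (\<Prod>i<k. Y i (\<sigma> i))"
  proof (rule prod.cong[OF refl])
    fix i assume i: "i \<in> {..<k}"
    then have "\<sigma> i \<in> {..<k}" using permutes_in_image[of \<sigma> "{..<k}" i] s by simp
    then show "X i (\<sigma> i) = Y i (\<sigma> i)" using i assms by simp
  qed
  then show "of_int (sign \<sigma>) * (\<Prod>i<k. X i (\<sigma> i)) = of_int (sign \<sigma>) * (\<Prod>i<k. Y i (\<sigma> i))"
    by simp
qed

lemma mdet_col_scale:
  "mdet k (\<lambda>i j. X i j * s j) = (\<Prod>j<k. s j) * mdet k X"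
  unfolding mdet_def sum_distrib_left
proof (intro sum.cong refl)
  fix \<sigma> assume "\<sigma> \<in> {\<sigma>. \<sigma> permutes {..<k}}"
  then have p: "(\<Prod>i<k. s (\<sigma> i)) = (\<Prod>j<k. s j)"
    using prod.permute[of \<sigma> "{..<k}" s] by (simp add: comp_def)
  have "(\<Prod>i<k. X i (\<sigma> i) * s (\<sigma> i)) = (\<Prod>i<k. X i (\<sigma> i)) * (\<Prod>i<k. s (\<sigma> i))"
    by (rule prod.distrib)
  then show "of_int (sign \<sigma>) * (\<Prod>i<k. X i (\<sigma> i) * s (\<sigma> i)) =
      (\<Prod>j<k. s j) * (of_int (sign \<sigma>) * (\<Prod>i<k. X i (\<sigma> i)))"
    using p by (simp only: mult_ac)
qed

lemma mdet_permute_rows: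
  assumes \<pi>: "\<pi> permutes {..<k}"
  shows "mdet k (\<lambda>i j. X (\<pi> i) j) = of_int (sign \<pi>) * mdet k X"
proof -
  let ?P = "{\<sigma>. \<sigma> permutes {..<k}}"
  have bij: "bij_betw \<pi> {..<k} {..<k}" using \<pi> by (rule permutes_imp_bij)
  have 1: "(\<Prod>i<k. X (\<pi> i) (\<sigma> i)) = (\<Prod>l<k. X l ((\<sigma> \<circ> inv \<pi>) l))" for \<sigma>
    using prod.reindex_bij_betw[OF bij, of "\<lambda>l. X l ((\<sigma> \<circ> inv \<pi>) l)"]
    by (simp add: permutes_inverses[OF \<pi>])
  have "mdet k (\<lambda>i j. X (\<pi> i) j) = (\<Sum>\<sigma>\<in>?P. of_int (sign \<sigma>) * (\<Prod>l<k. X l ((\<sigma> \<circ> inv \<pi>) l)))"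
    unfolding mdet_def using 1 by simp
  also have "\<dots> = (\<Sum>\<tau>\<in>?P. of_int (sign (\<tau> \<circ> \<pi>)) * (\<Prod>l<k. X l (\<tau> l)))"
  proof (rule sum.reindex_bij_witness[where i="\<lambda>\<tau>. \<tau> \<circ> \<pi>" and j="\<lambda>\<sigma>. \<sigma> \<circ> inv \<pi>"])
    fix a assume "a \<in> ?P"
    show "a \<circ> inv \<pi> \<circ> \<pi> = a" using permutes_inv_o[OF \<pi>] by (simp add: comp_assoc)
    show "a \<circ> inv \<pi> \<in> ?P" using \<open>a \<in> ?P\<close> permutes_compose[OF permutes_inv[OF \<pi>], of a] by simp
    show "of_int (sign (a \<circ> inv \<pi> \<circ> \<pi>)) * (\<Prod>l<k. X l ((a \<circ> inv \<pi>) l)) =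
          of_int (sign a) * (\<Prod>l<k. X l ((a \<circ> inv \<pi>) l))"
      using permutes_inv_o[OF \<pi>] by (simp add: comp_assoc)
  next
    fix b assume "b \<in> ?P"
    show "b \<circ> \<pi> \<circ> inv \<pi> = b" using permutes_inv_o[OF \<pi>] by (simp add: comp_assoc)
    show "b \<circ> \<pi> \<in> ?P" using \<open>b \<in> ?P\<close> permutes_compose[OF \<pi>, of b] by simp
  qed
  also have "\<dots> = (\<Sum>\<tau>\<in>?P. of_int (sign \<pi>) * (of_int (sign \<tau>) * (\<Prod>l<k. X l (\<tau> l))))"
  proof (intro sum.cong refl)
    fix \<tau> assume "\<tau> \<in> ?P"
    then have "permutation \<tau>" "permutation \<pi>" using \<pi> permutation_permutes[of \<tau>] permutation_permutes[of \<pi>] by auto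
    then show "of_int (sign (\<tau> \<circ> \<pi>)) * (\<Prod>l<k. X l (\<tau> l)) = of_int (sign \<pi>) * (of_int (sign \<tau>) * (\<Prod>l<k. X l (\<tau> l)))"
      by (simp add: sign_compose)
  qed
  also have "\<dots> = of_int (sign \<pi>) * mdet k X"
    unfolding mdet_def by (simp add: sum_distrib_left)
  finally show ?thesis .
qed

lemma mdet_identical_rows:
  fixes X :: "nat \<Rightarrow> nat \<Rightarrow> 'a::field_char_0"
  assumes "i1 < k" "i2 < k" "i1 \<noteq> i2" "\<And>j. j < k \<Longrightarrow> X i1 j = X i2 j"
  shows "mdet k X = 0"
proof -
  let ?\<pi> = "Transposition.transpose i1 i2"
  have p: "?\<pi> permutes {..<k}" using assms by (intro permutes_swap_id) auto
  have "mdet k (\<lambda>i j. X (?\<pi> i) j) = mdet k X"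
  proof (rule mdet_cong)
    fix i j assume "i < k" "j < k"
    then show "X (?\<pi> i) j = X i j"
      using assms(4) by (cases "i = i1"; cases "i = i2") (simp_all add: transpose_def)
  qed
  moreover have "mdet k (\<lambda>i j. X (?\<pi> i) j) = - mdet k X"
    using mdet_permute_rows[OF p, of X] assms by (simp add: sign_swap_id)
  ultimately show ?thesis by simp
qed

lemma mdet_diag:
  assumes "\<And>\<sigma>. \<sigma> permutes {..<k} \<Longrightarrow> \<sigma> \<noteq> id \<Longrightarrow> (\<Prod>i<k. X i (\<sigma> i)) = 0"
  shows "mdet k X = (\<Prod>i<k. X i i)"
proof -
  let ?P = "{\<sigma>. \<sigma> permutes {..<k}}"
  have f: "finite ?P" by (simp add: finite_permutations)
  have "mdet k X = of_int (sign (id::nat\<Rightarrow>nat)) * (\<Prod>i<k. X i (id i)) +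
      (\<Sum>\<sigma>\<in>?P - {id}. of_int (sign \<sigma>) * (\<Prod>i<k. X i (\<sigma> i)))"
    unfolding mdet_def by (subst sum.remove[OF f, of id]) (auto simp: permutes_id)
  also have "(\<Sum>\<sigma>\<in>?P - {id}. of_int (sign \<sigma>) * (\<Prod>i<k. X i (\<sigma> i))) = 0"
  proof (rule sum.neutral, rule ballI)
    fix \<sigma> assume "\<sigma> \<in> ?P - {id}"
    then have "(\<Prod>i<k. X i (\<sigma> i)) = 0" using assms by blast
    then show "of_int (sign \<sigma>) * (\<Prod>i<k. X i (\<sigma> i)) = 0" by simp
  qed
  finally show ?thesis by simp
qed

lemma rep_facts:
  assumes "finite S"
  shows "distinct (rep S)" "set (rep S) = S" "length (rep S) = card S"
  using assms by (auto simp: rep_def)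

lemma cauchy_binet:
  fixes a :: "nat \<Rightarrow> mono \<Rightarrow> 'a::field_char_0" and b :: "mono \<Rightarrow> nat \<Rightarrow> 'a"
  assumes fin: "finite K"
  shows "mdet r (\<lambda>i j. \<Sum>k\<in>K. a i k * b k j) =
     (\<Sum>S\<in>{S. S \<subseteq> K \<and> card S = r}. mdet r (\<lambda>i j. a i (rep S ! j)) * mdet r (\<lambda>i j. b (rep S ! i) j))"
proof -
  let ?P = "{\<sigma>. \<sigma> permutes {..<r}}"
  let ?F = "PiE {..<r} (\<lambda>_. K)"
  let ?D = "\<lambda>\<phi>. mdet r (\<lambda>i j. b (\<phi> i) j)"
  let ?G = "\<lambda>\<phi>. (\<Prod>i<r. a i (\<phi> i)) * ?D \<phi>"
  let ?SS = "{S. S \<subseteq> K \<and> card S = r}"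
  let ?I = "{\<phi>\<in>?F. inj_on \<phi> {..<r}}"
  let ?J = "\<lambda>\<phi>. (\<phi> ` {..<r}, \<lambda>i. if i < r then inv_into {..<r} ((!) (rep (\<phi> ` {..<r}))) (\<phi> i) else i)"
  let ?Psi = "\<lambda>(S::mono set, \<pi>::nat\<Rightarrow>nat). (\<lambda>i. if i < r then rep S ! \<pi> i else undefined)"
  have finP: "finite ?P" by (simp add: finite_permutations)
  have finF: "finite ?F" using fin by (simp add: finite_PiE)
  have finSS: "finite ?SS" using fin by (auto intro: finite_subset[of _ "Pow K"])
  have "mdet r (\<lambda>i j. \<Sum>k\<in>K. a i k * b k j) =
      (\<Sum>\<sigma>\<in>?P. of_int (sign \<sigma>) * (\<Sum>\<phi>\<in>?F. \<Prod>i<r. a i (\<phi> i) * b (\<phi> i) (\<sigma> i)))"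
    unfolding mdet_def using fin by (simp add: prod_sum_PiE)
  also have "\<dots> = (\<Sum>\<sigma>\<in>?P. \<Sum>\<phi>\<in>?F. (\<Prod>i<r. a i (\<phi> i)) * (of_int (sign \<sigma>) * (\<Prod>i<r. b (\<phi> i) (\<sigma> i))))"
    by (simp add: sum_distrib_left prod.distrib mult.left_commute)
  also have "\<dots> = (\<Sum>\<phi>\<in>?F. \<Sum>\<sigma>\<in>?P. (\<Prod>i<r. a i (\<phi> i)) * (of_int (sign \<sigma>) * (\<Prod>i<r. b (\<phi> i) (\<sigma> i))))"
    by (rule sum.swap)
  also have "\<dots> = (\<Sum>\<phi>\<in>?F. ?G \<phi>)"
    unfolding mdet_def by (simp add: sum_distrib_left)
  also have "\<dots> = (\<Sum>\<phi>\<in>?I. ?G \<phi>)"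
  proof (rule sum.mono_neutral_right[OF finF])
    show "?I \<subseteq> ?F" by blast
    show "\<forall>\<phi>\<in>?F - ?I. ?G \<phi> = 0"
    proof
      fix \<phi> assume "\<phi> \<in> ?F - ?I"
      then obtain i1 i2 where "i1 < r" "i2 < r" "i1 \<noteq> i2" "\<phi> i1 = \<phi> i2"
        unfolding inj_on_def by auto
      then have "?D \<phi> = 0" by (intro mdet_identical_rows[of i1 r i2]) auto
      then show "?G \<phi> = 0" by simp
    qed
  qed
  also have "\<dots> = (\<Sum>x\<in>Sigma ?SS (\<lambda>_. ?P). ?G (?Psi x))"
  proof (rule sum.reindex_bij_witness[where i="?Psi" and j="?J"])
    fix \<phi> assume \<phi>: "\<phi> \<in> ?I"
    let ?S = "\<phi> ` {..<r}"
    have finS: "finite ?S" by simp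
    have cardS: "card ?S = r" using \<phi> by (simp add: card_image)
    note rf = rep_facts[OF finS]
    have bij: "bij_betw ((!) (rep ?S)) {..<r} ?S"
      using rf cardS by (intro bij_betw_nth) auto
    let ?\<pi> = "\<lambda>i. if i < r then inv_into {..<r} ((!) (rep ?S)) (\<phi> i) else i"
    have nth_pi: "rep ?S ! ?\<pi> i = \<phi> i" if "i < r" for i
      using that bij by (simp add: bij_betw_inv_into_right)
    have pi_lt: "?\<pi> i < r" if "i < r" for i
    proof -
      have "\<phi> i \<in> (!) (rep ?S) ` {..<r}" using that bij by (simp add: bij_betw_def)
      then show ?thesis using that by (simp add: inv_into_into[where A="{..<r}", simplified])
    qed
    show "?Psi (?S, ?\<pi>) = \<phi>"
    proof
      fix i show "?Psi (?S, ?\<pi>) i = \<phi> i"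
        using \<phi> nth_pi by (cases "i < r") (auto simp: PiE_def extensional_def)
    qed
    have "?\<pi> permutes {..<r}"
    proof (rule bij_imp_permutes)
      have inj: "inj_on ?\<pi> {..<r}"
      proof (rule inj_onI)
        fix x y assume "x \<in> {..<r}" "y \<in> {..<r}" "?\<pi> x = ?\<pi> y"
        then have "\<phi> x = \<phi> y" using nth_pi by (metis lessThan_iff)
        then show "x = y" using \<phi> \<open>x \<in> {..<r}\<close> \<open>y \<in> {..<r}\<close> by (auto simp: inj_on_def)
      qed
      have "?\<pi> ` {..<r} \<subseteq> {..<r}" using pi_lt by auto
      then have "?\<pi> ` {..<r} = {..<r}" using inj by (intro endo_inj_surj) auto
      then show "bij_betw ?\<pi> {..<r} {..<r}" using inj by (simp add: bij_betw_def)
    qed auto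
    moreover have "?S \<in> ?SS" using \<phi> cardS by auto
    ultimately show "(?S, ?\<pi>) \<in> Sigma ?SS (\<lambda>_. ?P)" by auto
    show "?G (?Psi (?S, ?\<pi>)) = ?G \<phi>" using \<open>?Psi (?S, ?\<pi>) = \<phi>\<close> by simp
  next
    fix x assume x: "x \<in> Sigma ?SS (\<lambda>_. ?P)"
    then obtain S \<pi> where x_eq: "x = (S, \<pi>)" and S: "S \<subseteq> K" "card S = r" and \<pi>: "\<pi> permutes {..<r}" by auto
    have finS: "finite S" using S fin finite_subset by auto
    note rf = rep_facts[OF finS]
    have pil: "\<pi> i < r" if "i < r" for i using \<pi> that permutes_in_image by fastforce
    let ?\<phi> = "?Psi (S, \<pi>)"
    have img: "?\<phi> ` {..<r} = S"
    proof -
      have "?\<phi> ` {..<r} = (\<lambda>i. rep S ! i) ` (\<pi> ` {..<r})" by (auto simp: image_iff)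
      also have "\<pi> ` {..<r} = {..<r}" using \<pi> by (rule permutes_image)
      also have "(\<lambda>i. rep S ! i) ` {..<r} = set (rep S)" using rf S by (auto simp: set_conv_nth)
      finally show ?thesis using rf by simp
    qed
    have bij: "bij_betw ((!) (rep S)) {..<r} S"
      using rf S by (intro bij_betw_nth) auto
    have R1: "?J ?\<phi> = (S, \<pi>)"
    proof -
      have "(\<lambda>i. if i < r then inv_into {..<r} ((!) (rep S)) (?\<phi> i) else i) = \<pi>"
      proof
        fix i show "(if i < r then inv_into {..<r} ((!) (rep S)) (?\<phi> i) else i) = \<pi> i"
        proof (cases "i < r")
          case True
          then show ?thesis using pil[OF True] bij by (simp add: bij_betw_def inv_into_f_f)
        next
          case False then show ?thesis using \<pi> by (simp add: permutes_not_in)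
        qed
      qed
      then show ?thesis unfolding img by simp
    qed
    show "?J (?Psi x) = x" unfolding x_eq by (rule R1)
    have "?\<phi> \<in> ?F" using pil rf S by (auto simp: PiE_def extensional_def set_conv_nth[symmetric] intro!: nth_mem)
    moreover have "inj_on ?\<phi> {..<r}"
    proof (rule inj_onI)
      fix i j assume ij: "i \<in> {..<r}" "j \<in> {..<r}" "?\<phi> i = ?\<phi> j"
      then have "\<pi> i = \<pi> j" using pil rf S by (simp add: nth_eq_iff_index_eq)
      then show "i = j" using permutes_inj[OF \<pi>] by (auto simp: inj_def)
    qed
    ultimately have R2: "?\<phi> \<in> ?I" by simp
    show "?Psi x \<in> ?I" unfolding x_eq by (rule R2)
  qed
  also have "\<dots> = (\<Sum>(S,\<pi>)\<in>Sigma ?SS (\<lambda>_. ?P). ?G (?Psi (S, \<pi>)))"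
    by (rule sum.cong[OF refl]) (auto split: prod.splits)
  also have "\<dots> = (\<Sum>S\<in>?SS. \<Sum>\<pi>\<in>?P. ?G (?Psi (S, \<pi>)))"
    by (rule sum.Sigma[symmetric]) (use finSS finP in auto)
  also have "\<dots> = (\<Sum>S\<in>?SS. mdet r (\<lambda>i j. a i (rep S ! j)) * mdet r (\<lambda>i j. b (rep S ! i) j))"
  proof (intro sum.cong refl)
    fix S assume S: "S \<in> ?SS"
    have eq: "?G (?Psi (S, \<pi>)) = of_int (sign \<pi>) * (\<Prod>i<r. a i (rep S ! \<pi> i)) * mdet r (\<lambda>i j. b (rep S ! i) j)"
      if \<pi>: "\<pi> permutes {..<r}" for \<pi>
    proof -
      have d: "?D (?Psi (S, \<pi>)) = mdet r (\<lambda>i j. (\<lambda>l j. b (rep S ! l) j) (\<pi> i) j)"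
        by (rule mdet_cong) simp
      also have "\<dots> = of_int (sign \<pi>) * mdet r (\<lambda>i j. b (rep S ! i) j)"
        by (rule mdet_permute_rows[OF \<pi>])
      finally have d2: "?D (?Psi (S, \<pi>)) = of_int (sign \<pi>) * mdet r (\<lambda>i j. b (rep S ! i) j)" .
      have p: "(\<Prod>i<r. a i (?Psi (S, \<pi>) i)) = (\<Prod>i<r. a i (rep S ! \<pi> i))"
        by (rule prod.cong) auto
      show ?thesis unfolding d2 p by (simp only: mult_ac)
    qed
    have "(\<Sum>\<pi>\<in>?P. ?G (?Psi (S, \<pi>))) =
        (\<Sum>\<pi>\<in>?P. of_int (sign \<pi>) * (\<Prod>i<r. a i (rep S ! \<pi> i)) * mdet r (\<lambda>i j. b (rep S ! i) j))"
      by (rule sum.cong[OF refl]) (use eq in simp)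
    then have "(\<Sum>\<pi>\<in>?P. ?G (?Psi (S, \<pi>))) =
        (\<Sum>\<pi>\<in>?P. of_int (sign \<pi>) * (\<Prod>i<r. a i (rep S ! \<pi> i))) * mdet r (\<lambda>i j. b (rep S ! i) j)"
      by (simp only: sum_distrib_right)
    then show "(\<Sum>\<pi>\<in>?P. ?G (?Psi (S, \<pi>))) = mdet r (\<lambda>i j. a i (rep S ! j)) * mdet r (\<lambda>i j. b (rep S ! i) j)"
      by (simp add: mdet_def)
  qed
  finally show ?thesis .
qed


definition Lf :: "nat \<Rightarrow> (nat \<Rightarrow> nat \<Rightarrow> 'b::comm_ring_1) \<Rightarrow> nat \<Rightarrow> 'b mpoly" where
  "Lf n M i = (\<Sum>j\<le>n. const (M j i) * var j)"

definition eact :: "nat \<Rightarrow> (nat \<Rightarrow> nat \<Rightarrow> 'b::comm_ring_1) \<Rightarrow> mono \<Rightarrow> 'b mpoly" where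
  "eact n M A = (\<Prod>i\<le>n. Lf n M i ^ Poly_Mapping.lookup A i)"

lemma act_Ev: "act n M p = Ev const (eact n M) p"
  unfolding act_def Ev_def eact_def Lf_def ..

lemma rh_const: "rh (const :: 'b::comm_ring_1 \<Rightarrow> 'b mpoly)"
  by unfold_locales (auto simp: const_def single_add mult_single)

lemma evl_act: "evl const (eact n (M :: nat \<Rightarrow> nat \<Rightarrow> 'b::comm_ring_1))"
proof -
  interpret rh "const :: 'b \<Rightarrow> 'b mpoly" by (rule rh_const)
  show ?thesis
    by unfold_locales (auto simp: eact_def lookup_add power_add prod.distrib)
qed

lemma rh_act: "rh (act n (M :: nat \<Rightarrow> nat \<Rightarrow> 'b::comm_ring_1))"
proof -
  interpret evl const "eact n M" by (rule evl_act)
  show ?thesis unfolding act_Ev[abs_def] by (rule rh_Ev)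
qed

lemma act_single: "act n M (Poly_Mapping.single A c) = const c * eact n M A"
proof -
  interpret evl const "eact n M" by (rule evl_act)
  show ?thesis unfolding act_Ev by (rule Ev_single)
qed

lemma const_one: "const 1 = 1" by (simp add: const_def)

lemma act_const: "act n M (const c) = const c"
  by (simp add: const_def act_single) (simp add: eact_def)

lemma act_monom: "act n M (monom B) = eact n M B"
  by (simp add: monom_def act_single const_one)

lemma pow_lookup_single: "(x::'c::monoid_mult) ^ Poly_Mapping.lookup (Poly_Mapping.single j 1) i = (if i = j then x else 1)"
  by (simp add: lookup_single when_def)

lemma eact_single:
  assumes "j \<le> n" shows "eact n M (Poly_Mapping.single j 1) = Lf n M j"
proof -
  have "eact n M (Poly_Mapping.single j 1) = (\<Prod>i\<le>n. if i = j then Lf n M i else 1)"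
    unfolding eact_def by (rule prod.cong[OF refl]) (rule pow_lookup_single)
  then show ?thesis using assms by simp
qed

lemma act_var: "j \<le> n \<Longrightarrow> act n M (var j) = Lf n M j"
  unfolding var_def act_monom by (rule eact_single)

lemma act_Lf:
  fixes M :: "nat \<Rightarrow> nat \<Rightarrow> 'b::comm_ring_1"
  shows "act n h (Lf n M i) = Lf n (mmul n h M) i"
proof -
  interpret rh "act n h" by (rule rh_act)
  interpret c: rh "const :: 'b \<Rightarrow> 'b mpoly" by (rule rh_const)
  have "act n h (Lf n M i) = (\<Sum>j\<le>n. const (M j i) * (\<Sum>k\<le>n. const (h k j) * var k))"
    unfolding Lf_def by (simp add: hsum hmult act_const act_var Lf_def)
  also have "\<dots> = (\<Sum>j\<le>n. \<Sum>k\<le>n. const (h k j * M j i) * var k)"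
    by (simp add: sum_distrib_left c.hmult mult_ac)
  also have "\<dots> = (\<Sum>k\<le>n. \<Sum>j\<le>n. const (h k j * M j i) * var k)"
    by (rule sum.swap)
  also have "\<dots> = Lf n (mmul n h M) i"
    unfolding Lf_def mmul_def by (simp add: c.hsum sum_distrib_right)
  finally show ?thesis .
qed

lemma act_comp: "act n h (act n M f) = act n (mmul n h M) f"
proof -
  interpret rh "act n h" by (rule rh_act)
  show ?thesis
    unfolding act_def[of n M] act_def[of n "mmul n h M"]
    by (simp add: hsum hmult hprod hpower act_const act_Lf[unfolded Lf_def])
qed

lemma lookup_const_mult: "Poly_Mapping.lookup (const c * p) C = c * Poly_Mapping.lookup p C"
  by (simp add: const_def mult_map_scale_conv_mult[symmetric] Poly_Mapping.map.rep_eq when_def)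

lemma act_lookup_lin:
  assumes "finite K" "Poly_Mapping.keys q \<subseteq> K"
  shows "Poly_Mapping.lookup (act n h q) C = (\<Sum>B\<in>K. Poly_Mapping.lookup q B * Poly_Mapping.lookup (act n h (monom B)) C)"
proof -
  interpret evl const "eact n h" by (rule evl_act)
  have "act n h q = (\<Sum>B\<in>K. const (Poly_Mapping.lookup q B) * eact n h B)"
    unfolding act_Ev by (rule Ev_superset[OF assms])
  then show ?thesis by (simp add: lookup_sum lookup_const_mult act_monom)
qed

section \<open>Homogeneity\<close>

lemma monos_deg_add: "A \<in> monos_deg n d1 \<Longrightarrow> B \<in> monos_deg n d2 \<Longrightarrow> A + B \<in> monos_deg n (d1 + d2)"
  unfolding monos_deg_def using keys_add[of A B] by (auto simp: lookup_add sum.distrib)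

definition hd :: "nat \<Rightarrow> nat \<Rightarrow> ('b::zero) mpoly \<Rightarrow> bool" where
  "hd n d p \<longleftrightarrow> Poly_Mapping.keys p \<subseteq> monos_deg n d"

lemma hd_mult: "hd n d1 p \<Longrightarrow> hd n d2 q \<Longrightarrow> hd n (d1 + d2) ((p::'b::comm_ring_1 mpoly) * q)"
  unfolding hd_def using keys_mult[of p q] monos_deg_add by blast

lemma hd_add: "hd n d p \<Longrightarrow> hd n d q \<Longrightarrow> hd n d ((p::'b::comm_ring_1 mpoly) + q)"
  unfolding hd_def using keys_add[of p q] by blast

lemma hd_zero: "hd n d 0" by (simp add: hd_def)

lemma hd_sum: "(\<And>x. x \<in> X \<Longrightarrow> hd n d (f x)) \<Longrightarrow> hd n d (sum f X :: 'b::comm_ring_1 mpoly)"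
  by (induction X rule: infinite_finite_induct) (auto simp: hd_zero hd_add)

lemma zero_monos_deg: "0 \<in> monos_deg n 0" by (simp add: monos_deg_def)

lemma hd_one: "hd n 0 (1::'b::comm_ring_1 mpoly)" by (simp add: hd_def zero_monos_deg)

lemma hd_const_mult: "hd n d p \<Longrightarrow> hd n d (const c * (p::'b::comm_ring_1 mpoly))"
proof -
  assume "hd n d p"
  moreover have "hd n 0 (const c :: 'b mpoly)" by (simp add: hd_def const_def zero_monos_deg)
  ultimately show ?thesis using hd_mult[of n 0 "const c" d p] by simp
qed

lemma hd_power: "hd n d p \<Longrightarrow> hd n (k * d) ((p::'b::comm_ring_1 mpoly) ^ k)"
  by (induction k) (auto simp: hd_one intro: hd_mult[of n d p "k*d" for k, simplified add.commute])

lemma hd_prod: "finite I \<Longrightarrow> (\<And>i. i \<in> I \<Longrightarrow> hd n (d i) (f i)) \<Longrightarrow> hd n (\<Sum>i\<in>I. d i) (\<Prod>i\<in>I. f i :: 'b::comm_ring_1 mpoly)"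
  by (induction I rule: finite_induct) (auto simp: hd_one intro: hd_mult)

lemma single_monos: "j \<le> n \<Longrightarrow> Poly_Mapping.single j 1 \<in> monos_deg n 1"
proof -
  assume j: "j \<le> n"
  have "(\<Sum>i\<le>n. Poly_Mapping.lookup (Poly_Mapping.single j (1::nat)) i) = (\<Sum>i\<le>n. if j = i then 1 else 0)"
    by (rule sum.cong[OF refl]) (simp add: lookup_single when_def)
  also have "\<dots> = 1" using j by simp
  finally show ?thesis using j unfolding monos_deg_def by simp
qed

lemma hd_var: "j \<le> n \<Longrightarrow> hd n 1 (var j :: 'b::comm_ring_1 mpoly)"
  unfolding hd_def var_def monom_def using single_monos[of j n] by simp

lemma hd_Lf: "hd n 1 (Lf n M i)"
  unfolding Lf_def by (rule hd_sum, rule hd_const_mult, rule hd_var) simp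

lemma hd_eact: "A \<in> monos_deg n d \<Longrightarrow> hd n d (eact n M A)"
proof -
  assume A: "A \<in> monos_deg n d"
  have "hd n (\<Sum>i\<le>n. Poly_Mapping.lookup A i * 1) (eact n M A)"
    unfolding eact_def by (intro hd_prod hd_power hd_Lf) auto
  then show ?thesis using A by (simp add: monos_deg_def)
qed

lemma keys_act:
  assumes "Poly_Mapping.keys f \<subseteq> monos_deg n d"
  shows "Poly_Mapping.keys (act n M f) \<subseteq> monos_deg n d"
proof -
  have "hd n d (act n M f)"
    unfolding act_def using assms
    by (intro hd_sum hd_const_mult) (auto intro: hd_eact[unfolded eact_def Lf_def])
  then show ?thesis by (simp add: hd_def)
qed


section \<open>Evaluation of generic polynomials\<close>

definition eg :: "(nat \<Rightarrow> nat \<Rightarrow> 'a::comm_ring_1) \<Rightarrow> ((nat \<times> nat) \<Rightarrow>\<^sub>0 nat) \<Rightarrow> 'a" where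
  "eg g E = (\<Prod>ij\<in>Poly_Mapping.keys E. g (fst ij) (snd ij) ^ Poly_Mapping.lookup E ij)"

lemma geval_Ev: "geval g P = Ev id (eg g) P"
  unfolding geval_def Ev_def eg_def by simp

lemma eg_superset: "finite K \<Longrightarrow> Poly_Mapping.keys E \<subseteq> K \<Longrightarrow>
   eg g E = (\<Prod>ij\<in>K. g (fst ij) (snd ij) ^ Poly_Mapping.lookup E ij)"
  unfolding eg_def by (rule prod.mono_neutral_left) (auto simp: in_keys_iff)

lemma evl_geval: "evl id (eg g)"
proof (unfold_locales)
  show "eg g 0 = 1" by (simp add: eg_def)
next
  fix A B :: "(nat \<times> nat) \<Rightarrow>\<^sub>0 nat"
  let ?K = "Poly_Mapping.keys A \<union> Poly_Mapping.keys B"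
  have "eg g (A + B) = (\<Prod>ij\<in>?K. g (fst ij) (snd ij) ^ Poly_Mapping.lookup (A + B) ij)"
    by (rule eg_superset) (use keys_add[of A B] in auto)
  also have "\<dots> = (\<Prod>ij\<in>?K. g (fst ij) (snd ij) ^ Poly_Mapping.lookup A ij) *
        (\<Prod>ij\<in>?K. g (fst ij) (snd ij) ^ Poly_Mapping.lookup B ij)"
    by (simp add: lookup_add power_add prod.distrib)
  also have "\<dots> = eg g A * eg g B"
    using eg_superset[of ?K A g] eg_superset[of ?K B g] by simp
  finally show "eg g (A + B) = eg g A * eg g B" .
qed auto

lemma rh_geval: "rh (geval g)"
proof -
  interpret evl id "eg g" by (rule evl_geval)
  show ?thesis unfolding geval_Ev[abs_def] by (rule rh_Ev)
qed

lemma geval_single: "geval g (Poly_Mapping.single E c) = c * eg g E"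
proof -
  interpret evl id "eg g" by (rule evl_geval)
  show ?thesis unfolding geval_Ev by (simp add: Ev_single)
qed

lemma geval_Gmat: "geval g (Gmat i j) = g i j"
  by (simp add: Gmat_def geval_single eg_def)

lemma geval_gconst: "geval g (gconst c) = c"
  by (simp add: gconst_def geval_single eg_def)

lemma lookup_map_hom: "rh \<psi> \<Longrightarrow> Poly_Mapping.lookup (Poly_Mapping.map \<psi> p) k = \<psi> (Poly_Mapping.lookup p k)"
  by (simp add: Poly_Mapping.map.rep_eq when_def rh.hzero)

lemma map_Ev:
  assumes "rh \<psi>"
  shows "Poly_Mapping.map \<psi> p = Ev (\<lambda>c. const (\<psi> c)) monom p"
proof (rule poly_mapping_eqI)
  fix k
  have "Ev (\<lambda>c. const (\<psi> c)) monom p = (\<Sum>A\<in>Poly_Mapping.keys p. Poly_Mapping.single A (\<psi> (Poly_Mapping.lookup p A)))"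
    unfolding Ev_def by (simp add: const_def monom_def mult_single)
  then show "Poly_Mapping.lookup (Poly_Mapping.map \<psi> p) k = Poly_Mapping.lookup (Ev (\<lambda>c. const (\<psi> c)) monom p) k"
    using assms by (auto simp: lookup_map_hom lookup_sum lookup_single when_def in_keys_iff rh.hzero)
qed

lemma rh_map:
  fixes \<psi> :: "'b::comm_ring_1 \<Rightarrow> 'c::comm_ring_1"
  assumes "rh \<psi>"
  shows "rh (Poly_Mapping.map \<psi> :: 'b mpoly \<Rightarrow> 'c mpoly)"
proof -
  interpret p: rh \<psi> by fact
  interpret c: rh "const :: 'c \<Rightarrow> 'c mpoly" by (rule rh_const)
  interpret e: evl "\<lambda>c. const (\<psi> c)" "monom :: mono \<Rightarrow> 'c mpoly"
    by unfold_locales (auto simp: p.hadd p.hmult p.hone c.hadd c.hmult c.hone monom_def mult_single)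
  show ?thesis using e.rh_Ev unfolding map_Ev[OF assms, abs_def] .
qed

lemma map_const: "rh \<psi> \<Longrightarrow> Poly_Mapping.map \<psi> (const c) = const (\<psi> c)"
  by (simp add: const_def rh.hzero)

lemma map_var: "rh \<psi> \<Longrightarrow> Poly_Mapping.map \<psi> (var j) = var j"
  by (simp add: var_def monom_def rh.hzero rh.hone)

lemma single_eq_0: "Poly_Mapping.single k c = 0 \<longleftrightarrow> c = 0"
  by (metis lookup_single_eq lookup_zero single_zero)

lemma keys_map_gconst: "Poly_Mapping.keys (Poly_Mapping.map gconst f) = Poly_Mapping.keys f"
  by (auto simp: in_keys_iff Poly_Mapping.map.rep_eq when_def gconst_def single_eq_0)

lemma map_geval_act:
  fixes f :: "'a::comm_ring_1 mpoly"
  shows "Poly_Mapping.map (geval M) (act n Gmat (Poly_Mapping.map gconst f)) = act n M f"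
proof -
  have rg: "rh (geval M)" by (rule rh_geval)
  interpret rh "Poly_Mapping.map (geval M) :: 'a gpoly mpoly \<Rightarrow> 'a mpoly" by (rule rh_map[OF rg])
  have l: "Poly_Mapping.lookup (Poly_Mapping.map gconst f) A = gconst (Poly_Mapping.lookup f A)" for A
    by (simp add: Poly_Mapping.map.rep_eq when_def gconst_def)
  show ?thesis
    unfolding act_def keys_map_gconst
    by (simp add: hsum hmult hprod hpower map_const[OF rg] map_var[OF rg] l geval_gconst geval_Gmat)
qed

lemma geval_wedge:
  fixes fs :: "'a::comm_ring_1 mpoly list"
  assumes "length fs = r"
  shows "geval M (wedge n m r (map (\<lambda>f. act n Gmat (Poly_Mapping.map gconst f)) fs) S) =
         wedge n m r (map (act n M) fs) S"
proof (cases "S \<in> states n m r")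
  case False
  then show ?thesis by (simp add: wedge_def rh.hzero[OF rh_geval])
next
  case True
  have rg: "rh (geval M)" by (rule rh_geval)
  show ?thesis
    using True unfolding wedge_def
    apply (simp add: rh.hmdet[OF rg])
    apply (rule mdet_cong)
    using assms by (simp add: lookup_map_hom[OF rg, symmetric] map_geval_act)
qed


lemma Lf_lam:
  fixes t :: "'a::field"
  assumes "i \<le> n"
  shows "Lf n (lam w t) i = const (t powi (- w i)) * var i"
proof -
  have "Lf n (lam w t) i = (\<Sum>j\<le>n. if j = i then const (t powi (- w i)) * var i else 0)"
    unfolding Lf_def lam_def by (rule sum.cong[OF refl]) (simp add: const_def)
  then show ?thesis using assms by simp
qed

lemma var_pow: "(var i :: 'b::comm_ring_1 mpoly) ^ k = monom (Poly_Mapping.single i k)"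
proof (induction k)
  case 0 then show ?case by (simp add: monom_def)
next
  case (Suc k)
  have "Poly_Mapping.single i (Suc k) = Poly_Mapping.single i 1 + Poly_Mapping.single i k"
    by (simp add: single_add[symmetric])
  then show ?case using Suc by (simp add: var_def monom_def mult_single)
qed

lemma prod_monom: "finite I \<Longrightarrow> (\<Prod>i\<in>I. monom (f i) :: 'b::comm_ring_1 mpoly) = monom (\<Sum>i\<in>I. f i)"
  by (induction I rule: finite_induct) (simp_all add: monom_def mult_single)

lemma sum_single_lookup:
  fixes A :: mono
  assumes "Poly_Mapping.keys A \<subseteq> {..n}"
  shows "(\<Sum>i\<le>n. Poly_Mapping.single i (Poly_Mapping.lookup A i)) = A"
proof (rule poly_mapping_eqI)
  fix k
  show "Poly_Mapping.lookup (\<Sum>i\<le>n. Poly_Mapping.single i (Poly_Mapping.lookup A i)) k = Poly_Mapping.lookup A k"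
  proof (cases "k \<le> n")
    case True
    have "Poly_Mapping.lookup (\<Sum>i\<le>n. Poly_Mapping.single i (Poly_Mapping.lookup A i)) k =
        (\<Sum>i\<le>n. if i = k then Poly_Mapping.lookup A i else 0)"
      by (simp add: lookup_sum lookup_single when_def)
    also have "\<dots> = Poly_Mapping.lookup A k"
      using sum.delta[of "{..n}" k "Poly_Mapping.lookup A"] True by simp
    finally show ?thesis .
  next
    case False
    then have "Poly_Mapping.lookup A k = 0" using assms by (auto simp: in_keys_iff)
    then show ?thesis using False by (simp add: lookup_sum lookup_single when_def)
  qed
qed

lemma powi_prod:
  fixes t :: "'a::field"
  assumes "t \<noteq> 0" "finite I"
  shows "(\<Prod>i\<in>I. t powi (e i)) = t powi (\<Sum>i\<in>I. e i)"
  using assms(2) by (induction I rule: finite_induct) (simp_all add: power_int_add assms(1))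

lemma eact_lam:
  fixes t :: "'a::field"
  assumes t: "t \<noteq> 0" and A: "Poly_Mapping.keys A \<subseteq> {..n}"
  shows "eact n (lam w t) A = const (t powi (- wdot n w A)) * monom A"
proof -
  interpret c: rh "const :: 'a \<Rightarrow> 'a mpoly" by (rule rh_const)
  have "eact n (lam w t) A = (\<Prod>i\<le>n. (const (t powi (- w i)) * var i) ^ Poly_Mapping.lookup A i)"
    unfolding eact_def by (rule prod.cong[OF refl]) (simp add: Lf_lam)
  also have "\<dots> = const (\<Prod>i\<le>n. (t powi (- w i)) ^ Poly_Mapping.lookup A i) *
       (\<Prod>i\<le>n. monom (Poly_Mapping.single i (Poly_Mapping.lookup A i)))"
    by (simp add: power_mult_distrib prod.distrib c.hprod c.hpower var_pow)
  also have "(\<Prod>i\<le>n. monom (Poly_Mapping.single i (Poly_Mapping.lookup A i))) = (monom A :: 'a mpoly)"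
    by (simp add: prod_monom sum_single_lookup[OF A])
  also have "(\<Prod>i\<le>n. (t powi (- w i)) ^ Poly_Mapping.lookup A i) = t powi (- wdot n w A)"
  proof -
    have "(\<Prod>i\<le>n. (t powi (- w i)) ^ Poly_Mapping.lookup A i) = (\<Prod>i\<le>n. t powi (- w i * int (Poly_Mapping.lookup A i)))"
      by (simp add: power_int_power')
    also have "\<dots> = t powi (\<Sum>i\<le>n. - w i * int (Poly_Mapping.lookup A i))"
      using t by (simp add: powi_prod)
    also have "(\<Sum>i\<le>n. - w i * int (Poly_Mapping.lookup A i)) = - wdot n w A"
      unfolding wdot_def by (simp add: sum_negf)
    finally show ?thesis .
  qed
  finally show ?thesis .
qed

lemma lookup_monom: "Poly_Mapping.lookup (monom A :: 'b::comm_ring_1 mpoly) B = (if A = B then 1 else 0)"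
  by (simp add: monom_def lookup_single when_def)

lemma lookup_act_lam:
  fixes t :: "'a::field"
  assumes t: "t \<noteq> 0" and q: "Poly_Mapping.keys q \<subseteq> monos_deg n d"
  shows "Poly_Mapping.lookup (act n (lam w t) q) B = t powi (- wdot n w B) * Poly_Mapping.lookup q B"
proof -
  have "Poly_Mapping.lookup (act n (lam w t) q) B =
     (\<Sum>A\<in>Poly_Mapping.keys q. Poly_Mapping.lookup q A * Poly_Mapping.lookup (act n (lam w t) (monom A)) B)"
    by (rule act_lookup_lin) auto
  also have "\<dots> = (\<Sum>A\<in>Poly_Mapping.keys q. if A = B then Poly_Mapping.lookup q A * t powi (- wdot n w A) else 0)"
  proof (rule sum.cong[OF refl])
    fix A assume "A \<in> Poly_Mapping.keys q"
    then have "Poly_Mapping.keys A \<subseteq> {..n}" using q by (auto simp: monos_deg_def)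
    then show "Poly_Mapping.lookup q A * Poly_Mapping.lookup (act n (lam w t) (monom A)) B =
        (if A = B then Poly_Mapping.lookup q A * t powi (- wdot n w A) else 0)"
      using t by (simp add: act_monom eact_lam lookup_const_mult lookup_monom)
  qed
  also have "\<dots> = t powi (- wdot n w B) * Poly_Mapping.lookup q B"
    by (auto simp: in_keys_iff)
  finally show ?thesis .
qed

lemma sum_rep:
  assumes "finite S" "card S = r"
  shows "(\<Sum>j<r. f (rep S ! j)) = (\<Sum>B\<in>S. f B)"
proof -
  have "bij_betw ((!) (rep S)) {..<r} S"
    using rep_facts[OF assms(1)] assms by (intro bij_betw_nth) auto
  then show ?thesis by (rule sum.reindex_bij_betw)
qed

lemma finite_monos_deg: "finite (monos_deg n m)"
proof -
  let ?g = "\<lambda>A. restrict (Poly_Mapping.lookup A) {..n}"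
  have "?g ` monos_deg n m \<subseteq> PiE {..n} (\<lambda>_. {..m})"
  proof
    fix x assume "x \<in> ?g ` monos_deg n m"
    then obtain A where A: "A \<in> monos_deg n m" and x: "x = ?g A" by auto
    have "Poly_Mapping.lookup A i \<le> m" if "i \<le> n" for i
      using A that member_le_sum[of i "{..n}" "Poly_Mapping.lookup A"] by (auto simp: monos_deg_def)
    then show "x \<in> PiE {..n} (\<lambda>_. {..m})" using x by auto
  qed
  then have "finite (?g ` monos_deg n m)" by (rule finite_subset) (simp add: finite_PiE)
  moreover have "inj_on ?g (monos_deg n m)"
  proof (rule inj_onI)
    fix A B assume A: "A \<in> monos_deg n m" and B: "B \<in> monos_deg n m" and e: "?g A = ?g B"
    show "A = B"
    proof (rule poly_mapping_eqI)
      fix k show "Poly_Mapping.lookup A k = Poly_Mapping.lookup B k"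
      proof (cases "k \<le> n")
        case True then show ?thesis using fun_cong[OF e, of k] by simp
      next
        case False
        then have "k \<notin> Poly_Mapping.keys A" "k \<notin> Poly_Mapping.keys B" using A B by (auto simp: monos_deg_def)
        then show ?thesis by (simp add: in_keys_iff)
      qed
    qed
  qed
  ultimately show ?thesis by (rule finite_imageD)
qed

lemma finite_states: "finite (states n m r)"
  unfolding states_def using finite_monos_deg
  by (auto intro: finite_subset[of _ "Pow (monos_deg n m)"])

lemma states_facts:
  assumes "S \<in> states n m r"
  shows "finite S" "card S = r" "S \<subseteq> monos_deg n m" "distinct (rep S)" "set (rep S) = S" "length (rep S) = r"
proof -
  have fin: "finite S" using assms finite_monos_deg[of n m] by (auto simp: states_def intro: finite_subset)
  show "finite S" "card S = r" "S \<subseteq> monos_deg n m" "distinct (rep S)" "set (rep S) = S" "length (rep S) = r"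
    using rep_facts[OF fin] fin assms by (auto simp: states_def)
qed

lemma Ft_formula:
  fixes t :: "'a::field" and fs :: "'a mpoly list"
  assumes t: "t \<noteq> 0" and S: "S \<in> states n m r" and len: "length fs = r"
    and forms: "\<forall>f\<in>set fs. f \<in> forms n m"
  shows "wedge n m r (map (act n (mmul n (lam w t) g)) fs) S = t powi (- sweight n w S) * wedge n m r (map (act n g) fs) S"
proof -
  note sf = states_facts[OF S]
  have "wedge n m r (map (act n (mmul n (lam w t) g)) fs) S =
      mdet r (\<lambda>i j. Poly_Mapping.lookup (act n g (fs ! i)) (rep S ! j) * t powi (- wdot n w (rep S ! j)))"
    unfolding wedge_def using S
  proof (simp, intro mdet_cong)
    fix i j assume i: "i < r" and j: "j < r"
    have k: "Poly_Mapping.keys (act n g (fs ! i)) \<subseteq> monos_deg n m"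
      using forms i len by (intro keys_act) (auto simp: forms_def)
    show "Poly_Mapping.lookup (map (act n (mmul n (lam w t) g)) fs ! i) (rep S ! j) =
          Poly_Mapping.lookup (act n g (fs ! i)) (rep S ! j) * t powi - wdot n w (rep S ! j)"
      using i len by (simp add: act_comp[symmetric] lookup_act_lam[OF t k] mult.commute)
  qed
  also have "\<dots> = (\<Prod>j<r. t powi (- wdot n w (rep S ! j))) * mdet r (\<lambda>i j. Poly_Mapping.lookup (act n g (fs ! i)) (rep S ! j))"
    by (rule mdet_col_scale)
  also have "(\<Prod>j<r. t powi (- wdot n w (rep S ! j))) = t powi (- sweight n w S)"
    using t sf by (simp add: powi_prod sum_rep sweight_def sum_negf)
  also have "mdet r (\<lambda>i j. Poly_Mapping.lookup (act n g (fs ! i)) (rep S ! j)) = wedge n m r (map (act n g) fs) S"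
    unfolding wedge_def using S len by (simp, intro mdet_cong) simp
  finally show ?thesis .
qed


definition tdom :: "nat \<Rightarrow> (nat \<Rightarrow> int) \<Rightarrow> ('b::comm_ring_1) mpoly \<Rightarrow> mono \<Rightarrow> 'b \<Rightarrow> bool" where
  "tdom n w p A c \<longleftrightarrow> Poly_Mapping.lookup p A = c \<and>
     (\<forall>C\<in>Poly_Mapping.keys p. wdot n w A \<le> wdot n w C \<and> (wdot n w C = wdot n w A \<longrightarrow> C = A))"

lemma wdot_add: "wdot n w (A + B) = wdot n w A + wdot n w B"
  by (simp add: wdot_def lookup_add distrib_left sum.distrib)

lemma wdot_zero: "wdot n w 0 = 0"
  by (simp add: wdot_def)

lemma tdom_mult:
  assumes p: "tdom n w p A a" and q: "tdom n w q B b"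
  shows "tdom n w (p * q) (A + B) (a * b)"
proof -
  let ?wd = "wdot n w"
  have key: "C = A \<and> D = B" if C: "C \<in> Poly_Mapping.keys p" and D: "D \<in> Poly_Mapping.keys q"
      and e: "?wd C + ?wd D = ?wd A + ?wd B" for C D
  proof -
    have "?wd A \<le> ?wd C" "?wd B \<le> ?wd D" using p q C D by (auto simp: tdom_def)
    then have "?wd C = ?wd A" "?wd D = ?wd B" using e by linarith+
    then show ?thesis using p q C D by (auto simp: tdom_def)
  qed
  have "Poly_Mapping.lookup (p * q) (A + B) =
      (\<Sum>C\<in>Poly_Mapping.keys p. \<Sum>D\<in>Poly_Mapping.keys q.
         (if C = A \<and> D = B then Poly_Mapping.lookup p C * Poly_Mapping.lookup q D else 0))"
    unfolding pm_mult_expand[of p q]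
  proof (simp only: lookup_sum, intro sum.cong refl)
    fix C D assume C: "C \<in> Poly_Mapping.keys p" and D: "D \<in> Poly_Mapping.keys q"
    show "Poly_Mapping.lookup (Poly_Mapping.single (C + D) (Poly_Mapping.lookup p C * Poly_Mapping.lookup q D)) (A + B) =
        (if C = A \<and> D = B then Poly_Mapping.lookup p C * Poly_Mapping.lookup q D else 0)"
    proof (cases "C + D = A + B")
      case True
      then have "?wd C + ?wd D = ?wd A + ?wd B" by (metis wdot_add)
      then have "C = A \<and> D = B" using key C D by blast
      then show ?thesis by (simp add: lookup_single)
    next
      case False
      then show ?thesis by (auto simp: lookup_single when_def)
    qed
  qed
  also have "\<dots> = Poly_Mapping.lookup p A * Poly_Mapping.lookup q B"
  proof -
    have "(\<Sum>C\<in>Poly_Mapping.keys p. \<Sum>D\<in>Poly_Mapping.keys q.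
         (if C = A \<and> D = B then Poly_Mapping.lookup p C * Poly_Mapping.lookup q D else 0)) =
         (\<Sum>C\<in>Poly_Mapping.keys p. if C = A then (\<Sum>D\<in>Poly_Mapping.keys q. if D = B then Poly_Mapping.lookup p C * Poly_Mapping.lookup q D else 0) else 0)"
      by (intro sum.cong refl) auto
    also have "\<dots> = Poly_Mapping.lookup p A * Poly_Mapping.lookup q B"
      by (auto simp: in_keys_iff)
    finally show ?thesis .
  qed
  finally have l: "Poly_Mapping.lookup (p * q) (A + B) = a * b" using p q by (simp add: tdom_def)
  have "?wd (A + B) \<le> ?wd E \<and> (?wd E = ?wd (A + B) \<longrightarrow> E = A + B)" if E: "E \<in> Poly_Mapping.keys (p * q)" for E
  proof -
    obtain C D where C: "C \<in> Poly_Mapping.keys p" and D: "D \<in> Poly_Mapping.keys q" and ECD: "E = C + D"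
      using E keys_mult[of p q] by blast
    have "?wd A \<le> ?wd C" "?wd B \<le> ?wd D" using p q C D by (auto simp: tdom_def)
    moreover have "?wd E = ?wd C + ?wd D" "?wd (A + B) = ?wd A + ?wd B" using ECD by (simp_all add: wdot_add)
    moreover have "?wd C + ?wd D = ?wd A + ?wd B \<Longrightarrow> C = A \<and> D = B" using key C D by blast
    ultimately show ?thesis using ECD by auto
  qed
  then show ?thesis using l by (simp add: tdom_def)
qed

lemma tdom_one: "tdom n w 1 0 1"
  by (simp add: tdom_def)

lemma tdom_power:
  assumes "tdom n w p (Poly_Mapping.single i 1) a"
  shows "tdom n w (p ^ k) (Poly_Mapping.single i k) (a ^ k)"
proof (induction k)
  case 0 then show ?case by (simp add: tdom_one)
next
  case (Suc k)
  have "Poly_Mapping.single i (Suc k) = Poly_Mapping.single i 1 + Poly_Mapping.single i k"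
    by (simp add: single_add[symmetric])
  then show ?case using tdom_mult[OF assms Suc] by simp
qed

lemma tdom_prod:
  assumes "finite I" "\<And>i. i \<in> I \<Longrightarrow> tdom n w (f i) (A i) (a i)"
  shows "tdom n w (\<Prod>i\<in>I. f i) (\<Sum>i\<in>I. A i) (\<Prod>i\<in>I. a i)"
  using assms by (induction I rule: finite_induct) (auto simp: tdom_one intro: tdom_mult)

lemma wdot_single: "j \<le> n \<Longrightarrow> wdot n w (Poly_Mapping.single j 1) = w j"
proof -
  assume j: "j \<le> n"
  have "wdot n w (Poly_Mapping.single j 1) = (\<Sum>k\<le>n. if k = j then w k else 0)"
    unfolding wdot_def by (rule sum.cong[OF refl]) (auto simp: lookup_single when_def)
  then show ?thesis using j by simp
qed

lemma single_one_inj: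
  assumes k: "(k::nat) \<noteq> 0"
  shows "Poly_Mapping.single j k = Poly_Mapping.single i k \<longleftrightarrow> j = i"
proof
  assume e: "Poly_Mapping.single j k = Poly_Mapping.single i k"
  have "Poly_Mapping.lookup (Poly_Mapping.single j k) j = Poly_Mapping.lookup (Poly_Mapping.single i k) j"
    using e by simp
  then show "j = i" using k by (auto simp: lookup_single when_def split: if_splits)
qed simp

lemma single_one_inj1: "Poly_Mapping.single j (1::nat) = Poly_Mapping.single i 1 \<longleftrightarrow> j = i"
  by (rule single_one_inj) simp

lemma tdom_Lf:
  fixes h :: "nat \<Rightarrow> nat \<Rightarrow> 'b::comm_ring_1"
  assumes ut: "upper_tri n h" and wd: "\<forall>i j. i < j \<and> j \<le> n \<longrightarrow> w j < w i" and i: "i \<le> n"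
  shows "tdom n w (Lf n h i) (Poly_Mapping.single i 1) (h i i)"
proof -
  have lk: "Poly_Mapping.lookup (Lf n h i) C = (\<Sum>j\<le>n. if Poly_Mapping.single j 1 = C then h j i else 0)" for C
    unfolding Lf_def by (simp add: lookup_sum lookup_const_mult var_def lookup_monom if_distrib cong: if_cong)
  have "Poly_Mapping.lookup (Lf n h i) (Poly_Mapping.single i 1) = (\<Sum>j\<le>n. if j = i then h j i else 0)"
    unfolding lk by (rule sum.cong[OF refl]) (simp only: single_one_inj1)
  also have "\<dots> = h i i" using i by simp
  finally have l: "Poly_Mapping.lookup (Lf n h i) (Poly_Mapping.single i 1) = h i i" .
  have "wdot n w (Poly_Mapping.single i 1) \<le> wdot n w C \<and>
      (wdot n w C = wdot n w (Poly_Mapping.single i 1) \<longrightarrow> C = Poly_Mapping.single i 1)"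
    if C: "C \<in> Poly_Mapping.keys (Lf n h i)" for C
  proof -
    have "(\<Sum>j\<le>n. if Poly_Mapping.single j 1 = C then h j i else 0) \<noteq> 0"
      using C lk[of C] by (simp add: in_keys_iff)
    then obtain j where j0: "j \<in> {..n}" and jj: "(if Poly_Mapping.single j 1 = C then h j i else 0) \<noteq> 0"
      by (rule sum.not_neutral_contains_not_neutral)
    have j: "j \<le> n" using j0 by simp
    have jC: "Poly_Mapping.single j 1 = C" and hji: "h j i \<noteq> 0" using jj by (auto split: if_splits)
    have "\<not> i < j" using ut j hji by (auto simp: upper_tri_def)
    then have ji: "j \<le> i" by simp
    have wj1: "wdot n w C = w j" using wdot_single[OF j, of w] unfolding jC .
    have wj2: "wdot n w (Poly_Mapping.single i 1) = w i" using wdot_single[OF i] .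
    note wj = wj1 wj2
    show ?thesis
    proof (cases "j = i")
      case True then show ?thesis using jC wj by auto
    next
      case False
      then have "w i < w j" using wd ji i by auto
      then show ?thesis using wj by simp
    qed
  qed
  then show ?thesis using l by (simp add: tdom_def)
qed

lemma tdom_eact:
  fixes h :: "nat \<Rightarrow> nat \<Rightarrow> 'b::comm_ring_1"
  assumes ut: "upper_tri n h" and wd: "\<forall>i j. i < j \<and> j \<le> n \<longrightarrow> w j < w i"
    and B: "Poly_Mapping.keys B \<subseteq> {..n}"
  shows "tdom n w (eact n h B) B (\<Prod>i\<le>n. h i i ^ Poly_Mapping.lookup B i)"
proof -
  have "tdom n w (eact n h B) (\<Sum>i\<le>n. Poly_Mapping.single i (Poly_Mapping.lookup B i)) (\<Prod>i\<le>n. h i i ^ Poly_Mapping.lookup B i)"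
    unfolding eact_def by (intro tdom_prod tdom_power tdom_Lf[OF ut wd]) auto
  then show ?thesis using sum_single_lookup[OF B] by simp
qed


definition Hh :: "nat \<Rightarrow> nat \<Rightarrow> nat \<Rightarrow> (nat \<Rightarrow> nat \<Rightarrow> 'a::comm_ring_1) \<Rightarrow> mono set \<Rightarrow> mono set \<Rightarrow> 'a" where
  "Hh n m r h S0 C = wedge n m r (map (\<lambda>B. act n h (monom B)) (rep S0)) C"

lemma Hh_eq:
  assumes S0: "S0 \<in> states n m r" and C: "C \<in> states n m r"
  shows "Hh n m r h S0 C = mdet r (\<lambda>i j. Poly_Mapping.lookup (eact n h (rep S0 ! i)) (rep C ! j))"
  unfolding Hh_def wedge_def using C
  by (simp, intro mdet_cong) (use states_facts[OF S0] in \<open>simp add: act_monom\<close>)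

lemma set_rep_image: "S \<in> states n m r \<Longrightarrow> S = (\<lambda>i. rep S ! i) ` {..<r}"
  using states_facts[of S n m r] by (auto simp: set_conv_nth)

lemma perm_term:
  fixes h :: "nat \<Rightarrow> nat \<Rightarrow> 'a::field"
  assumes ut: "upper_tri n h" and wd: "\<forall>i j. i < j \<and> j \<le> n \<longrightarrow> w j < w i"
    and S0: "S0 \<in> states n m r" and C: "C \<in> states n m r" and \<sigma>: "\<sigma> permutes {..<r}"
    and nz: "(\<Prod>i<r. Poly_Mapping.lookup (eact n h (rep S0 ! i)) (rep C ! \<sigma> i)) \<noteq> 0"
  shows "sweight n w S0 \<le> sweight n w C \<and> (sweight n w S0 = sweight n w C \<longrightarrow> (\<forall>i<r. rep C ! \<sigma> i = rep S0 ! i))"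
proof -
  let ?wd = "wdot n w"
  note s0f = states_facts[OF S0] and cf = states_facts[OF C]
  have each: "?wd (rep S0 ! i) \<le> ?wd (rep C ! \<sigma> i) \<and> (?wd (rep C ! \<sigma> i) = ?wd (rep S0 ! i) \<longrightarrow> rep C ! \<sigma> i = rep S0 ! i)"
    if i: "i < r" for i
  proof -
    have "Poly_Mapping.lookup (eact n h (rep S0 ! i)) (rep C ! \<sigma> i) \<noteq> 0"
      using nz i by (auto simp: prod_zero_iff)
    then have k: "rep C ! \<sigma> i \<in> Poly_Mapping.keys (eact n h (rep S0 ! i))" by (simp add: in_keys_iff)
    have "rep S0 ! i \<in> S0" using s0f i nth_mem by metis
    then have "Poly_Mapping.keys (rep S0 ! i) \<subseteq> {..n}" using s0f by (auto simp: monos_deg_def)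
    from tdom_eact[OF ut wd this] k show ?thesis by (auto simp: tdom_def)
  qed
  have sS0: "sweight n w S0 = (\<Sum>i<r. ?wd (rep S0 ! i))"
    unfolding sweight_def using sum_rep[of S0 r ?wd] s0f by simp
  have "sweight n w C = (\<Sum>j<r. ?wd (rep C ! j))"
    unfolding sweight_def using sum_rep[of C r ?wd] cf by simp
  also have "\<dots> = (\<Sum>i<r. ?wd (rep C ! \<sigma> i))"
    using sum.permute[OF \<sigma>, of "\<lambda>j. ?wd (rep C ! j)"] by (simp add: comp_def)
  finally have sC: "sweight n w C = (\<Sum>i<r. ?wd (rep C ! \<sigma> i))" .
  have le: "sweight n w S0 \<le> sweight n w C"
    unfolding sS0 sC by (rule sum_mono) (use each in auto)
  have "\<forall>i<r. rep C ! \<sigma> i = rep S0 ! i" if eq: "sweight n w S0 = sweight n w C"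
  proof -
    have "(\<Sum>i<r. ?wd (rep C ! \<sigma> i) - ?wd (rep S0 ! i)) = 0"
      using eq unfolding sS0 sC by (simp add: sum_subtractf)
    then have "\<forall>i\<in>{..<r}. ?wd (rep C ! \<sigma> i) - ?wd (rep S0 ! i) = 0"
      by (subst (asm) sum_nonneg_eq_0_iff) (use each in auto)
    then show ?thesis using each by auto
  qed
  then show ?thesis using le by blast
qed

lemma Hh_nz:
  fixes h :: "nat \<Rightarrow> nat \<Rightarrow> 'a::field"
  assumes ut: "upper_tri n h" and wd: "\<forall>i j. i < j \<and> j \<le> n \<longrightarrow> w j < w i"
    and S0: "S0 \<in> states n m r" and C: "C \<in> states n m r" and nz: "Hh n m r h S0 C \<noteq> 0"
  shows "sweight n w S0 \<le> sweight n w C \<and> (sweight n w S0 = sweight n w C \<longrightarrow> S0 = C)"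
proof -
  have "mdet r (\<lambda>i j. Poly_Mapping.lookup (eact n h (rep S0 ! i)) (rep C ! j)) \<noteq> 0"
    using nz Hh_eq[OF S0 C, of h] by simp
  then obtain \<sigma> where \<sigma>0: "\<sigma> \<in> {\<sigma>. \<sigma> permutes {..<r}}" and
      t: "of_int (sign \<sigma>) * (\<Prod>i<r. Poly_Mapping.lookup (eact n h (rep S0 ! i)) (rep C ! \<sigma> i)) \<noteq> 0"
    unfolding mdet_def by (rule sum.not_neutral_contains_not_neutral)
  have \<sigma>: "\<sigma> permutes {..<r}" using \<sigma>0 by simp
  have p: "(\<Prod>i<r. Poly_Mapping.lookup (eact n h (rep S0 ! i)) (rep C ! \<sigma> i)) \<noteq> 0" using t by auto
  note pt = perm_term[OF ut wd S0 C \<sigma> p]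
  have "S0 = C" if eq: "sweight n w S0 = sweight n w C"
  proof -
    have ii: "\<forall>i<r. rep C ! \<sigma> i = rep S0 ! i" using pt eq by blast
    have "S0 = (\<lambda>i. rep S0 ! i) ` {..<r}" by (rule set_rep_image[OF S0])
    also have "\<dots> = (\<lambda>i. rep C ! i) ` (\<sigma> ` {..<r})" using ii by (auto simp: image_iff)
    also have "\<sigma> ` {..<r} = {..<r}" by (rule permutes_image[OF \<sigma>])
    also have "(\<lambda>i. rep C ! i) ` {..<r} = C" by (rule set_rep_image[OF C, symmetric])
    finally show ?thesis .
  qed
  then show ?thesis using pt by blast
qed

lemma Hh_diag:
  fixes h :: "nat \<Rightarrow> nat \<Rightarrow> 'a::field" and w :: "nat \<Rightarrow> int"
  assumes ut: "upper_tri n h" and wd: "\<forall>i j. i < j \<and> j \<le> n \<longrightarrow> w j < w i"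
    and C: "C \<in> states n m r" and hd: "\<And>k. k \<le> n \<Longrightarrow> h k k \<noteq> 0"
  shows "Hh n m r h C C \<noteq> 0"
proof -
  note cf = states_facts[OF C]
  let ?X = "\<lambda>i j. Poly_Mapping.lookup (eact n h (rep C ! i)) (rep C ! j)"
  have "mdet r ?X = (\<Prod>i<r. ?X i i)"
  proof (rule mdet_diag)
    fix \<sigma> assume \<sigma>: "\<sigma> permutes {..<r}" and ne: "\<sigma> \<noteq> id"
    show "(\<Prod>i<r. ?X i (\<sigma> i)) = 0"
    proof (rule ccontr)
      assume a: "(\<Prod>i<r. ?X i (\<sigma> i)) \<noteq> 0"
      have a2: "(\<Prod>i<r. Poly_Mapping.lookup (eact n h (rep C ! i)) (rep C ! \<sigma> i)) \<noteq> 0" using a by simp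
      from perm_term[of n h w C m r C \<sigma>, OF ut wd C C \<sigma> a2] have ii: "\<forall>i<r. rep C ! \<sigma> i = rep C ! i" by simp
      have "\<sigma> = id"
      proof
        fix i show "\<sigma> i = id i"
        proof (cases "i < r")
          case True
          then have "\<sigma> i < r" using \<sigma> permutes_in_image[OF \<sigma>, of i] by simp
          have "rep C ! \<sigma> i = rep C ! i" using ii True by simp
          then show ?thesis using nth_eq_iff_index_eq[of "rep C" "\<sigma> i" i] cf \<open>\<sigma> i < r\<close> True by simp
        next
          case False then show ?thesis using \<sigma> by (simp add: permutes_not_in)
        qed
      qed
      then show False using ne by simp
    qed
  qed
  also have "\<dots> \<noteq> 0"
  proof -
    have "?X i i \<noteq> 0" if i: "i < r" for i
    proof -
      have "rep C ! i \<in> C" using cf i nth_mem by metis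
      then have "Poly_Mapping.keys (rep C ! i) \<subseteq> {..n}" using cf by (auto simp: monos_deg_def)
      from tdom_eact[OF ut wd this] have "?X i i = (\<Prod>k\<le>n. h k k ^ Poly_Mapping.lookup (rep C ! i) k)"
        by (simp add: tdom_def)
      also have "\<dots> \<noteq> 0" using hd by (simp add: prod_zero_iff)
      finally show ?thesis .
    qed
    then show ?thesis by (simp add: prod_zero_iff)
  qed
  finally show ?thesis using Hh_eq[OF C C, of h] by simp
qed

lemma h_diag:
  fixes h :: "nat \<Rightarrow> nat \<Rightarrow> 'a::field"
  assumes gl: "h \<in> GL n" and ut: "upper_tri n h" and k: "k \<le> n"
  shows "h k k \<noteq> 0"
proof -
  have md: "mdet (Suc n) h = (\<Prod>i<Suc n. h i i)"
  proof (rule mdet_diag)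
    fix \<sigma> assume \<sigma>: "\<sigma> permutes {..<Suc n}" and ne: "\<sigma> \<noteq> id"
    have "\<exists>i\<in>{..<Suc n}. \<sigma> i < i"
    proof (rule ccontr)
      assume "\<not> ?thesis"
      then have "\<forall>i\<in>{..<Suc n}. \<sigma> i \<ge> i" by (auto simp: not_less)
      then have "\<sigma> = id" by (rule permutes_natset_ge[OF \<sigma>])
      then show False using ne by simp
    qed
    then obtain i where i: "i < Suc n" and si: "\<sigma> i < i" by auto
    have z: "h i (\<sigma> i) = 0" using ut i si by (auto simp: upper_tri_def)
    show "(\<Prod>i<Suc n. h i (\<sigma> i)) = 0"
      by (rule prod_zero) (use i z in auto)
  qed
  have nz: "mdet (Suc n) h \<noteq> 0" using gl by (simp add: GL_def)
  show ?thesis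
  proof
    assume z: "h k k = 0"
    have "(\<Prod>i<Suc n. h i i) = 0" by (rule prod_zero) (use k z in auto)
    then show False using md nz by simp
  qed

qed



lemma actW_wedge:
  fixes fs :: "'a::field_char_0 mpoly list"
  assumes C: "C \<in> states n m r" and len: "length fs = r" and forms: "\<forall>f\<in>set fs. f \<in> forms n m"
  shows "actW n m r h (wedge n m r (map (act n M) fs)) C = wedge n m r (map (act n (mmul n h M)) fs) C"
proof -
  let ?K = "monos_deg n m"
  have kf: "Poly_Mapping.keys (act n M (fs ! i)) \<subseteq> ?K" if "i < r" for i
    using forms that len by (intro keys_act) (auto simp: forms_def)
  have "wedge n m r (map (act n (mmul n h M)) fs) C =
      mdet r (\<lambda>i j. \<Sum>B\<in>?K. Poly_Mapping.lookup (act n M (fs ! i)) B * Poly_Mapping.lookup (act n h (monom B)) (rep C ! j))"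
    unfolding wedge_def using C
  proof (simp, intro mdet_cong)
    fix i j assume i: "i < r" and j: "j < r"
    have "Poly_Mapping.lookup (map (act n (mmul n h M)) fs ! i) (rep C ! j) =
        Poly_Mapping.lookup (act n h (act n M (fs ! i))) (rep C ! j)"
      using i len by (simp add: act_comp)
    also have "\<dots> = (\<Sum>B\<in>?K. Poly_Mapping.lookup (act n M (fs ! i)) B * Poly_Mapping.lookup (act n h (monom B)) (rep C ! j))"
      by (rule act_lookup_lin[OF finite_monos_deg kf[OF i]])
    finally show "Poly_Mapping.lookup (map (act n (mmul n h M)) fs ! i) (rep C ! j) =
        (\<Sum>B\<in>?K. Poly_Mapping.lookup (act n M (fs ! i)) B * Poly_Mapping.lookup (act n h (monom B)) (rep C ! j))" .
  qed
  also have "\<dots> = (\<Sum>S\<in>{S. S \<subseteq> ?K \<and> card S = r}.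
        mdet r (\<lambda>i j. Poly_Mapping.lookup (act n M (fs ! i)) (rep S ! j)) *
        mdet r (\<lambda>i j. Poly_Mapping.lookup (act n h (monom (rep S ! i))) (rep C ! j)))"
    by (rule cauchy_binet[OF finite_monos_deg])
  also have "\<dots> = actW n m r h (wedge n m r (map (act n M) fs)) C"
    unfolding actW_def
  proof (rule sum.cong)
    show "{S. S \<subseteq> ?K \<and> card S = r} = states n m r" by (simp add: states_def)
  next
    fix S assume S: "S \<in> states n m r"
    note sf = states_facts[OF S]
    have 1: "wedge n m r (map (act n M) fs) S = mdet r (\<lambda>i j. Poly_Mapping.lookup (act n M (fs ! i)) (rep S ! j))"
      unfolding wedge_def using S len by (simp, intro mdet_cong) simp
    have 2: "wedge n m r (map (\<lambda>B. act n h (monom B)) (rep S)) C =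
        mdet r (\<lambda>i j. Poly_Mapping.lookup (act n h (monom (rep S ! i))) (rep C ! j))"
      unfolding wedge_def using C sf by (simp, intro mdet_cong) simp
    show "mdet r (\<lambda>i j. Poly_Mapping.lookup (act n M (fs ! i)) (rep S ! j)) *
        mdet r (\<lambda>i j. Poly_Mapping.lookup (act n h (monom (rep S ! i))) (rep C ! j)) =
        wedge n m r (map (act n M) fs) S * wedge n m r (map (\<lambda>B. act n h (monom B)) (rep S)) C"
      using 1 2 by simp
  qed
  finally show ?thesis by simp
qed

lemma laurent_finite:
  fixes a :: "'i \<Rightarrow> 'a::field" and e :: "'i \<Rightarrow> int"
  assumes fin: "finite I" and nz: "(\<Sum>i\<in>{i\<in>I. e i = k}. a i) \<noteq> 0"
  shows "finite {t. t \<noteq> 0 \<and> (\<Sum>i\<in>I. a i * t powi e i) = 0}"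
proof -
  define M where "M = (\<Sum>i\<in>I. \<bar>e i\<bar>)"
  have Me: "e i + M \<ge> 0" if "i \<in> I" for i
  proof -
    have "\<bar>e i\<bar> \<le> M" unfolding M_def using fin that by (intro member_le_sum) auto
    then show ?thesis by linarith
  qed
  define p where "p = (\<Sum>i\<in>I. Polynomial.monom (a i) (nat (e i + M)))"
  obtain i0 where i0: "i0 \<in> I" "e i0 = k"
    using nz by (metis (mono_tags, lifting) empty_Collect_eq sum.empty)
  have kM: "k + M \<ge> 0" using Me[OF i0(1)] i0(2) by simp
  have "coeff p (nat (k + M)) = (\<Sum>i\<in>I. if e i = k then a i else 0)"
    unfolding p_def coeff_sum
  proof (rule sum.cong[OF refl])
    fix i assume i: "i \<in> I"
    have "(nat (e i + M) = nat (k + M)) = (e i = k)" using Me[OF i] kM by auto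
    then show "coeff (Polynomial.monom (a i) (nat (e i + M))) (nat (k + M)) = (if e i = k then a i else 0)"
      by simp
  qed
  also have "\<dots> = (\<Sum>i\<in>{i\<in>I. e i = k}. a i)"
    using fin by (simp add: sum.inter_filter)
  finally have "p \<noteq> 0" using nz by auto
  then have fr: "finite {t. poly p t = 0}" by (rule poly_roots_finite)
  have "{t. t \<noteq> 0 \<and> (\<Sum>i\<in>I. a i * t powi e i) = 0} \<subseteq> {t. poly p t = 0}"
  proof safe
    fix t :: 'a assume t: "t \<noteq> 0" and z: "(\<Sum>i\<in>I. a i * t powi e i) = 0"
    have "(\<Sum>i\<in>I. a i * t powi e i) = t powi (- M) * poly p t"
      unfolding p_def poly_sum sum_distrib_left
    proof (rule sum.cong[OF refl])
      fix i assume i: "i \<in> I"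
      have "t powi e i = t powi (- M) * t powi (e i + M)"
        using t by (simp add: power_int_add[symmetric])
      also have "t powi (e i + M) = t ^ nat (e i + M)"
        using Me[OF i] by (metis nonneg_int_cases nat_int power_int_of_nat)
      finally show "a i * t powi e i = t powi - M * poly (Polynomial.monom (a i) (nat (e i + M))) t"
        by (simp add: poly_monom mult_ac)
    qed
    then show "poly p t = 0" using z t by simp
  qed
  then show ?thesis using fr by (rule finite_subset)
qed

lemma group_zero:
  fixes a :: "'i \<Rightarrow> 'a::field" and e :: "'i \<Rightarrow> int"
  assumes fin: "finite I" and z: "\<And>k. (\<Sum>i\<in>{i\<in>I. e i = k}. a i) = 0"
  shows "(\<Sum>i\<in>I. a i * t powi e i) = 0"
proof -
  have "(\<Sum>i\<in>I. a i * t powi e i) = (\<Sum>k\<in>e ` I. \<Sum>i\<in>{i\<in>I. e i = k}. a i * t powi e i)"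
    using fin by (rule sum.image_gen)
  also have "\<dots> = (\<Sum>k\<in>e ` I. (\<Sum>i\<in>{i\<in>I. e i = k}. a i) * t powi k)"
    by (intro sum.cong refl) (auto simp: sum_distrib_right)
  also have "\<dots> = 0" using z by simp
  finally show ?thesis .
qed



theorem mainTheorem9:
  fixes n m r :: nat and fs :: "('a::field_char_0) mpoly list"
    and w :: "nat \<Rightarrow> int" and h g :: "nat \<Rightarrow> nat \<Rightarrow> 'a" and N :: int
  assumes "algebraically_closed TYPE('a)"
    and "length fs = r" and "\<forall>f\<in>set fs. f \<in> forms n m"
    and "\<forall>i j. i < j \<and> j \<le> n \<longrightarrow> w j < w i"
    and "distinguishes n w (r * m)"
    and "h \<in> GL n" and "upper_tri n h"
    and "g \<in> U n m r fs"
  shows "finite {t::'a. t \<noteq> 0 \<and>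
     supp n m r (actW n m r h (trunc n w N (wedge n m r (map (act n (mmul n (lam w t) g)) fs))))
       \<noteq> supp n m r (trunc n w N (wedge n m r (map (act n (mmul n (lam w t) g)) fs)))}"
proof -
  note len = assms(2) and forms = assms(3) and wd = assms(4) and gl = assms(6) and ut = assms(7) and gU = assms(8)
  define St where "St = states n m r"
  define c where "c = wedge n m r (map (act n g) fs)"
  define Ft where "Ft = (\<lambda>t::'a. wedge n m r (map (act n (mmul n (lam w t) g)) fs))"
  define H where "H = Hh n m r h"
  define e where "e = (\<lambda>S. - sweight n w S)"
  define E where "E = (\<lambda>C. {t. t \<noteq> 0 \<and> ((actW n m r h (trunc n w N (Ft t)) C \<noteq> 0) \<noteq> (trunc n w N (Ft t) C \<noteq> 0))})"
  have finSt: "finite St" unfolding St_def by (rule finite_states)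
  have hdiag: "\<And>k. k \<le> n \<Longrightarrow> h k k \<noteq> 0" using h_diag[OF gl ut] by blast
  have sub: "{t::'a. t \<noteq> 0 \<and>
     supp n m r (actW n m r h (trunc n w N (wedge n m r (map (act n (mmul n (lam w t) g)) fs))))
       \<noteq> supp n m r (trunc n w N (wedge n m r (map (act n (mmul n (lam w t) g)) fs)))} \<subseteq> (\<Union>C\<in>St. E C)"
  proof
    fix t assume "t \<in> {t::'a. t \<noteq> 0 \<and>
     supp n m r (actW n m r h (trunc n w N (wedge n m r (map (act n (mmul n (lam w t) g)) fs))))
       \<noteq> supp n m r (trunc n w N (wedge n m r (map (act n (mmul n (lam w t) g)) fs)))}"
    then have t: "t \<noteq> 0" and d: "supp n m r (actW n m r h (trunc n w N (Ft t))) \<noteq> supp n m r (trunc n w N (Ft t))"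
      unfolding Ft_def by auto
    from d obtain C where "C \<in> St" "(actW n m r h (trunc n w N (Ft t)) C \<noteq> 0) \<noteq> (trunc n w N (Ft t) C \<noteq> 0)"
      unfolding supp_def St_def by blast
    then show "t \<in> (\<Union>C\<in>St. E C)" using t unfolding E_def by blast
  qed
  have finE: "finite (E C)" if C: "C \<in> St" for C
  proof -
    have CS: "C \<in> states n m r" using C by (simp add: St_def)
    define b where "b = (\<lambda>S0. if N \<le> sweight n w S0 then c S0 * H S0 C else 0)"
    have Fform: "Ft t S = t powi e S * c S" if "t \<noteq> 0" "S \<in> St" for t S
      unfolding Ft_def c_def e_def using Ft_formula[OF that(1) _ len forms] that(2) by (simp add: St_def)
    have actW_exp: "actW n m r h F C = (\<Sum>S0\<in>St. F S0 * H S0 C)" for F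
      by (simp add: actW_def St_def H_def Hh_def)
    have trunc_sum: "actW n m r h (trunc n w N (Ft t)) C = (\<Sum>S0\<in>St. b S0 * t powi e S0)" if t: "t \<noteq> 0" for t
      unfolding actW_exp
      by (rule sum.cong[OF refl]) (simp add: trunc_def Fform[OF t] b_def mult_ac)
    have trunc_C: "(trunc n w N (Ft t) C \<noteq> 0) = (N \<le> sweight n w C \<and> c C \<noteq> 0)" if t: "t \<noteq> 0" for t
      using Fform[OF t C] t by (simp add: trunc_def)
    have Hnz: "sweight n w S0 \<le> sweight n w C \<and> (sweight n w S0 = sweight n w C \<longrightarrow> S0 = C)"
      if "S0 \<in> St" "H S0 C \<noteq> 0" for S0
      using Hh_nz[OF ut wd _ CS] that by (simp add: St_def H_def)
    show ?thesis
    proof (cases "N \<le> sweight n w C \<and> c C \<noteq> 0")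
      case True
      have "(\<Sum>S0\<in>{S0\<in>St. e S0 = e C}. b S0) = b C + (\<Sum>S0\<in>{S0\<in>St. e S0 = e C} - {C}. b S0)"
        using finSt C by (subst sum.remove[of _ C]) auto
      also have "(\<Sum>S0\<in>{S0\<in>St. e S0 = e C} - {C}. b S0) = 0"
      proof (rule sum.neutral, rule ballI)
        fix S0 assume S0: "S0 \<in> {S0\<in>St. e S0 = e C} - {C}"
        then have "H S0 C = 0" using Hnz[of S0] by (auto simp: e_def)
        then show "b S0 = 0" by (simp add: b_def)
      qed
      also have "b C = c C * H C C" using True by (simp add: b_def)
      finally have gs: "(\<Sum>S0\<in>{S0\<in>St. e S0 = e C}. b S0) = c C * H C C" by simp
      have "H C C \<noteq> 0" unfolding H_def by (rule Hh_diag[OF ut wd CS hdiag])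
      then have "(\<Sum>S0\<in>{S0\<in>St. e S0 = e C}. b S0) \<noteq> 0" using gs True by simp
      then have fin: "finite {t. t \<noteq> 0 \<and> (\<Sum>S0\<in>St. b S0 * t powi e S0) = 0}"
        by (rule laurent_finite[where a=b and e=e and k="e C", OF finSt])
      have "E C \<subseteq> {t. t \<noteq> 0 \<and> (\<Sum>S0\<in>St. b S0 * t powi e S0) = 0}"
      proof
        fix t assume "t \<in> E C"
        then have t: "t \<noteq> 0" and x: "(actW n m r h (trunc n w N (Ft t)) C \<noteq> 0) \<noteq> (trunc n w N (Ft t) C \<noteq> 0)"
          unfolding E_def by blast+
        have "trunc n w N (Ft t) C \<noteq> 0" using trunc_C[OF t] True by blast
        then have "actW n m r h (trunc n w N (Ft t)) C = 0" using x by blast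
        then show "t \<in> {t. t \<noteq> 0 \<and> (\<Sum>S0\<in>St. b S0 * t powi e S0) = 0}" using trunc_sum[OF t] t by simp
      qed
      then show ?thesis using fin by (rule finite_subset)
    next
      case False
      have EC: "E C \<subseteq> {t. t \<noteq> 0 \<and> (\<Sum>S0\<in>St. b S0 * t powi e S0) \<noteq> 0}"
      proof
        fix t assume "t \<in> E C"
        then have t: "t \<noteq> 0" and x: "(actW n m r h (trunc n w N (Ft t)) C \<noteq> 0) \<noteq> (trunc n w N (Ft t) C \<noteq> 0)"
          unfolding E_def by blast+
        have "\<not> trunc n w N (Ft t) C \<noteq> 0" using trunc_C[OF t] False by blast
        then have "actW n m r h (trunc n w N (Ft t)) C \<noteq> 0" using x by blast
        then show "t \<in> {t. t \<noteq> 0 \<and> (\<Sum>S0\<in>St. b S0 * t powi e S0) \<noteq> 0}" using trunc_sum[OF t] t by simp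
      qed
      show ?thesis
      proof (cases "N \<le> sweight n w C")
        case False
        have "b S0 = 0" if "S0 \<in> St" for S0
        proof (cases "N \<le> sweight n w S0 \<and> H S0 C \<noteq> 0")
          case True
          then show ?thesis using Hnz[OF that] False by linarith
        next
          case False then show ?thesis by (auto simp: b_def)
        qed
        then have "(\<Sum>S0\<in>St. b S0 * t powi e S0) = 0" for t by simp
        then have "E C = {}" using EC by blast
        then show ?thesis by simp
      next
        case True
        then have cC: "c C = 0" using \<open>\<not> (N \<le> sweight n w C \<and> c C \<noteq> 0)\<close> by simp
        define P where "P = wedge n m r (map (\<lambda>f. act n Gmat (Poly_Mapping.map gconst f)) fs) C"
        have "P = 0"
        proof (rule ccontr)
          assume "P \<noteq> 0"
          then have "geval g P \<noteq> 0" using gU unfolding U_def P_def Let_def by blast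
          moreover have "geval g P = c C" unfolding P_def c_def by (rule geval_wedge[OF len])
          ultimately show False using cC by simp
        qed
        have untr: "(\<Sum>S0\<in>St. (c S0 * H S0 C) * t powi e S0) = 0" if t: "t \<noteq> 0" for t
        proof -
          have "(\<Sum>S0\<in>St. (c S0 * H S0 C) * t powi e S0) = actW n m r h (Ft t) C"
            unfolding actW_exp by (rule sum.cong[OF refl]) (simp add: Fform[OF t] mult_ac)
          also have "\<dots> = wedge n m r (map (act n (mmul n h (mmul n (lam w t) g))) fs) C"
            unfolding Ft_def by (rule actW_wedge[OF CS len forms])
          also have "\<dots> = geval (mmul n h (mmul n (lam w t) g)) P"
            unfolding P_def by (rule geval_wedge[OF len, symmetric])
          also have "\<dots> = 0" using \<open>P = 0\<close> by (simp add: rh.hzero[OF rh_geval])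
          finally show ?thesis .
        qed
        show ?thesis
        proof (cases "\<exists>k. (\<Sum>S0\<in>{S0\<in>St. e S0 = k}. c S0 * H S0 C) \<noteq> 0")
          case True
          then obtain k where kk: "(\<Sum>S0\<in>{S0\<in>St. e S0 = k}. c S0 * H S0 C) \<noteq> 0" by blast
          have fin: "finite {t. t \<noteq> 0 \<and> (\<Sum>S0\<in>St. (c S0 * H S0 C) * t powi e S0) = 0}"
            by (rule laurent_finite[where a="\<lambda>S0. c S0 * H S0 C" and e=e and k=k, OF finSt kk])
          have "E C \<subseteq> {t. t \<noteq> 0 \<and> (\<Sum>S0\<in>St. (c S0 * H S0 C) * t powi e S0) = 0}"
          proof
            fix t assume "t \<in> E C"
            then have t: "t \<noteq> 0" unfolding E_def by blast
            then show "t \<in> {t. t \<noteq> 0 \<and> (\<Sum>S0\<in>St. (c S0 * H S0 C) * t powi e S0) = 0}" using untr[OF t] by simp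
          qed
          then show ?thesis using fin by (rule finite_subset)
        next
          case False
          have "(\<Sum>S0\<in>{S0\<in>St. e S0 = k}. b S0) = 0" for k
          proof -
            have "(\<Sum>S0\<in>{S0\<in>St. e S0 = k}. b S0) = (\<Sum>S0\<in>{S0\<in>St. e S0 = k}. if N \<le> - k then c S0 * H S0 C else 0)"
              by (rule sum.cong[OF refl]) (auto simp: b_def e_def)
            also have "\<dots> = (if N \<le> - k then (\<Sum>S0\<in>{S0\<in>St. e S0 = k}. c S0 * H S0 C) else 0)"
              by simp
            also have "\<dots> = 0" using False by simp
            finally show ?thesis .
          qed
          then have "(\<Sum>S0\<in>St. b S0 * t powi e S0) = 0" for t
            by (rule group_zero[where a=b and e=e, OF finSt])
          then have "E C = {}" using EC by blast
          then show ?thesis by simp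
        qed
      qed
    qed
  qed
  have "finite (\<Union>C\<in>St. E C)" using finSt finE by blast
  then show ?thesis using sub by (rule finite_subset[rotated])
qed


end
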